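(* Let $\Omega$ be a real $d\times d$ skew-symmetric matrix ($\Omega^T=-\Omega$), and let $F:\mathbb{R}^d\times\mathbb{R}\to\mathbb{R}^d$ be bounded and continuous, with bounded continuous derivative in its first argument, and quasiperiodic in $t$: there are constants $\nu_1,\dots,\nu_n$ and a function $\hat F$, $1$-periodic in each of its last $n$ arguments, with $F(x,t)=\hat F(x,\nu_1t,\dots,\nu_nt)$. For $x\in\mathbb{R}^d$ define $$C(x):=\langle F(e^{\Omega t}x,t)\rangle_t,\qquad P(x):=\widehat{\Omega^{-1}}\,C(x),$$ $$\mathcal{F}(x,t):=e^{-\Omega t}F(e^{\Omega t}x,t),\qquad \bar{\mathcal F}(x):=\langle \mathcal F(x,t)\rangle_t,$$ $$\mathcal{G}(x,t):=e^{-\Omega t}\big(F(e^{\Omega t}x,t)-\Omega P(x)\big),\qquad \bar{\mathcal G}(x):=\langle \mathcal G(x,t)\rangle_t,$$ and $\Delta\mathcal F(x,t):=\mathcal F(x,t)-\bar{\mathcal F}(x)$, $\Delta\mathcal G(x,t):=\mathcal G(x,t)-\bar{\mathcal G}(x)$. Then for every $x\in\mathbb{R}^d$, $$\big((\Delta\mathcal F-\Delta\mathcal G)\cdot\Delta\mathcal G\big)(x)=0,$$ and consequently $\|\Delta\mathcal F\|(x)^2=\|\Delta\mathcal G\|(x)^2+\|\Delta\mathcal F-\Delta\mathcal G\|(x)^2$, in particular $$\|\Delta\mathcal G\|(x)\le\|\Delta\mathcal F\|(x).$$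
   Context: Time average: for a function $f(x,t)$, $\langle f(x,t)\rangle_t:=\lim_{T\to\infty}\frac1T\int_0^T f(x,t)\,dt$ (these limits exist under the stated quasiperiodicity assumptions, since $e^{\Omega t}$ is quasiperiodic in $t$ with frequencies given by the absolute values of the eigenvalues of $\Omega$). The matrix $\widehat{\Omega^{-1}}$: writing $\Omega=V^{-1}\mathrm{diag}(\lambda_i)V$ (diagonalization of the skew-symmetric $\Omega$, eigenvalues $\lambda_i$ purely imaginary), $\widehat{\Omega^{-1}}:=V^{-1}\mathrm{diag}(\mu_i)V$ with $\mu_i=\lambda_i^{-1}$ if $\lambda_i\neq0$ and $\mu_i=0$ if $\lambda_i=0$; in particular $\widehat{\Omega^{-1}}=\Omega^{-1}$ when $\Omega$ is invertible. $x$-indexed inner product: for column-vector-valued functions $w_1(t,x),w_2(t,x)$, $(w_1\cdot w_2)(x):=\langle w_1(t,x)^Tw_2(t,x)\rangle_t$, and $\|w\|(x):=\sqrt{(w\cdot w)(x)}$ is the induced norm. *)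

theory Defs
  imports "HOL-Analysis.Analysis"
begin

text \<open>Matrix power and matrix exponential e^{A t} (power series).\<close>
definition mpow :: "real^'n^'n \<Rightarrow> nat \<Rightarrow> real^'n^'n" where
  "mpow A k = ((\<lambda>B. B ** A) ^^ k) (mat 1)"

definition mexp :: "real^'n^'n \<Rightarrow> real \<Rightarrow> real^'n^'n" where
  "mexp A t = (\<Sum>k. (t ^ k / fact k) *\<^sub>R mpow A k)"

text \<open>Time average  lim_{T\<to>\<infinity>} (1/T) int_0^T f(t) dt.\<close>
definition tavg :: "(real \<Rightarrow> 'a::euclidean_space) \<Rightarrow> 'a" where
  "tavg f = Lim at_top (\<lambda>T. (1 / T) *\<^sub>R integral {0..T} f)"

text \<open>Diagonal matrix.\<close>
definition diag_mat :: "('n::finite \<Rightarrow> complex) \<Rightarrow> complex^'n^'n" where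
  "diag_mat l = (\<chi> i j. if i = j then l i else 0)"

text \<open>hat(Omega^{-1}): writing Omega = V^{-1} diag(lambda_i) V (complex diagonalization),
  hat(Omega^{-1}) = V^{-1} diag(mu_i) V with mu_i = 1/lambda_i if lambda_i \<noteq> 0 and 0 otherwise.\<close>
definition omega_hat_inv :: "real^'n^'n \<Rightarrow> real^'n^'n" where
  "omega_hat_inv \<Omega> = (SOME M. \<exists>(V::complex^'n^'n) l.
      invertible V \<and>
      map_matrix complex_of_real \<Omega> = matrix_inv V ** diag_mat l ** V \<and>
      map_matrix complex_of_real M =
        matrix_inv V ** diag_mat (\<lambda>i. if l i = 0 then 0 else inverse (l i)) ** V)"

text \<open>x-indexed inner product and norm of time-dependent vector fields.\<close>
definition tinner :: "(real \<Rightarrow> real^'n) \<Rightarrow> (real \<Rightarrow> real^'n) \<Rightarrow> real" where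
  "tinner w1 w2 = tavg (\<lambda>t. w1 t \<bullet> w2 t)"

definition tnorm :: "(real \<Rightarrow> real^'n) \<Rightarrow> real" where
  "tnorm w = sqrt (tinner w w)"

text \<open>The objects of the statement, parametrized by Omega and F.\<close>
definition avgC :: "real^'n^'n \<Rightarrow> (real^'n \<Rightarrow> real \<Rightarrow> real^'n) \<Rightarrow> real^'n \<Rightarrow> real^'n" where
  "avgC \<Omega> F y = tavg (\<lambda>t. F (mexp \<Omega> t *v y) t)"

definition Pfun :: "real^'n^'n \<Rightarrow> (real^'n \<Rightarrow> real \<Rightarrow> real^'n) \<Rightarrow> real^'n \<Rightarrow> real^'n" where
  "Pfun \<Omega> F y = omega_hat_inv \<Omega> *v avgC \<Omega> F y"

definition calF :: "real^'n^'n \<Rightarrow> (real^'n \<Rightarrow> real \<Rightarrow> real^'n) \<Rightarrow> real^'n \<Rightarrow> real \<Rightarrow> real^'n" where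
  "calF \<Omega> F y t = mexp \<Omega> (- t) *v F (mexp \<Omega> t *v y) t"

definition calG :: "real^'n^'n \<Rightarrow> (real^'n \<Rightarrow> real \<Rightarrow> real^'n) \<Rightarrow> real^'n \<Rightarrow> real \<Rightarrow> real^'n" where
  "calG \<Omega> F y t = mexp \<Omega> (- t) *v (F (mexp \<Omega> t *v y) t - \<Omega> *v Pfun \<Omega> F y)"

definition DcalF :: "real^'n^'n \<Rightarrow> (real^'n \<Rightarrow> real \<Rightarrow> real^'n) \<Rightarrow> real^'n \<Rightarrow> real \<Rightarrow> real^'n" where
  "DcalF \<Omega> F y t = calF \<Omega> F y t - tavg (calF \<Omega> F y)"

definition DcalG :: "real^'n^'n \<Rightarrow> (real^'n \<Rightarrow> real \<Rightarrow> real^'n) \<Rightarrow> real^'n \<Rightarrow> real \<Rightarrow> real^'n" where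
  "DcalG \<Omega> F y t = calG \<Omega> F y t - tavg (calG \<Omega> F y)"

end

theory Submission
  imports Defs "HOL-Computational_Algebra.Fundamental_Theorem_Algebra"
begin

(* ---- from base/PD.thy ---- *)
definition hip :: "complex^'n \<Rightarrow> complex^'n \<Rightarrow> complex" where
  "hip u w = (\<Sum>i\<in>UNIV. cnj (u$i) * w$i)"

lemma hip_add_right: "hip u (v + w) = hip u v + hip u w"
  by (simp add: hip_def distrib_left sum.distrib)
lemma hip_diff_right: "hip u (v - w) = hip u v - hip u w"
  by (simp add: hip_def right_diff_distrib sum_subtractf)
lemma hip_scale_right: "hip u (c *s w) = c * hip u w"
  by (simp add: hip_def sum_distrib_left mult.left_commute)
lemma hip_scale_left: "hip (c *s u) w = cnj c * hip u w"
  by (simp add: hip_def sum_distrib_left mult.assoc)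
lemma hip_sum_right: "hip u (sum f S) = (\<Sum>s\<in>S. hip u (f s))"
  unfolding hip_def sum_component sum_distrib_left by (rule sum.swap)
lemma hip_zero_right[simp]: "hip u 0 = 0" by (simp add: hip_def)
lemma hip_cnj: "hip w u = cnj (hip u w)"
  by (simp add: hip_def mult.commute)
lemma hip_self: "hip u u = of_real (\<Sum>i\<in>UNIV. (cmod (u$i))\<^sup>2)"
  unfolding hip_def of_real_sum by (intro sum.cong refl) (metis complex_norm_square of_real_power mult.commute)
lemma hip_self_eq_0: "hip u u = 0 \<longleftrightarrow> u = 0"
proof
  assume "hip u u = 0"
  then have "(\<Sum>i\<in>UNIV. (cmod (u$i))\<^sup>2) = 0" unfolding hip_self of_real_eq_0_iff .
  then have "\<forall>i\<in>UNIV. (cmod (u$i))\<^sup>2 = 0" by (subst (asm) sum_nonneg_eq_0_iff) auto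
  then show "u = 0" by (simp add: vec_eq_iff)
qed (simp add: hip_def)

definition peval :: "complex^'n^'n \<Rightarrow> complex poly \<Rightarrow> complex^'n \<Rightarrow> complex^'n" where
  "peval A p u = (\<Sum>k\<le>degree p. coeff p k *s (((*v) A) ^^ k) u)"

lemma peval_bound: assumes "degree p \<le> m"
  shows "peval A p u = (\<Sum>k\<le>m. coeff p k *s (((*v) A) ^^ k) u)"
  unfolding peval_def using assms
  by (intro sum.mono_neutral_left) (auto simp: coeff_eq_0)

lemma peval_add: "peval A (p + q) u = peval A p u + peval A q u"
proof -
  let ?m = "max (degree p) (degree q)"
  have "degree (p + q) \<le> ?m" by (rule degree_add_le) auto
  then show ?thesis
    by (simp add: peval_bound[of _ ?m] vector_sadd_rdistrib sum.distrib)
qed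

lemma peval_smult: "peval A (smult a p) u = a *s peval A p u"
proof -
  have "degree (smult a p) \<le> degree p" by (rule degree_smult_le)
  then show ?thesis
    by (simp add: peval_bound[of _ "degree p"] vec.scale_sum_right vector_smult_assoc peval_def)
qed

lemma peval_pCons0: "peval A (pCons 0 p) u = A *v peval A p u"
proof -
  have "degree (pCons 0 p) \<le> Suc (degree p)" by simp
  then have "peval A (pCons 0 p) u = (\<Sum>k\<le>Suc (degree p). coeff (pCons 0 p) k *s (((*v) A) ^^ k) u)"
    by (rule peval_bound)
  also have "\<dots> = (\<Sum>k\<le>degree p. coeff p k *s (((*v) A) ^^ Suc k) u)"
    by (subst sum.atMost_Suc_shift) simp
  also have "\<dots> = A *v peval A p u"
    by (simp add: peval_def vec.sum vec.scale)
  finally show ?thesis .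
qed

lemma peval_linfac: "peval A ([:-z, 1:] * p) u = A *v peval A p u - z *s peval A p u"
proof -
  have e: "[:-z, 1:] * p = smult (-z) p + pCons 0 p" by (simp add: mult_pCons_left)
  show ?thesis
    by (simp only: e peval_add peval_smult peval_pCons0) (simp add: vec.scale_minus_left)
qed

lemma peval_in_subspace:
  assumes "vec.subspace W" "\<forall>v\<in>W. A *v v \<in> W" "u \<in> W"
  shows "peval A p u \<in> W"
proof -
  have "(((*v) A) ^^ k) u \<in> W" for k
    by (induction k) (use assms in auto)
  then show ?thesis unfolding peval_def
    by (intro vec.subspace_sum assms(1) vec.subspace_scale) auto
qed

lemma eig_from_poly:
  assumes W: "vec.subspace W" "\<forall>v\<in>W. A *v v \<in> W"
  shows "p \<noteq> 0 \<Longrightarrow> w \<in> W \<Longrightarrow> w \<noteq> 0 \<Longrightarrow> peval A p w = 0 \<Longrightarrow>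
     \<exists>v z. v \<in> W \<and> v \<noteq> 0 \<and> A *v v = z *s v"
proof (induction "degree p" arbitrary: p rule: less_induct)
  case less
  show ?case
  proof (cases "degree p = 0")
    case True
    then obtain a where p: "p = [:a:]" by (metis degree_0_id)
    with less.prems have "a \<noteq> 0" by auto
    have "peval A p w = a *s w" using True by (simp add: peval_def p)
    with less.prems \<open>a \<noteq> 0\<close> show ?thesis by (simp add: vec.scale_eq_0_iff)
  next
    case False
    then have "\<not> constant (poly p)" by (simp add: constant_degree)
    then obtain z where "poly p z = 0" using fundamental_theorem_of_algebra by blast
    then obtain q where pq: "p = [:-z, 1:] * q" by (auto simp: poly_eq_0_iff_dvd dvd_def)
    with less.prems have q0: "q \<noteq> 0" by auto
    have "degree p = degree [:-z, 1:] + degree q" unfolding pq using q0 by (subst degree_mult_eq) auto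
    then have dq: "degree q < degree p" by simp
    show ?thesis
    proof (cases "peval A q w = 0")
      case True
      from less.hyps[OF dq q0 less.prems(2,3) True] show ?thesis .
    next
      case False
      have "A *v peval A q w - z *s peval A q w = 0" using less.prems(4) unfolding pq peval_linfac .
      then have "A *v peval A q w = z *s peval A q w" by simp
      moreover have "peval A q w \<in> W" by (rule peval_in_subspace[OF W less.prems(2)])
      ultimately show ?thesis using False by blast
    qed
  qed
qed

lemma peval_diff: "peval A (p - q) u = peval A p u - peval A q u"
proof -
  have "p - q = p + smult (-1) q" by simp
  then show ?thesis by (simp only: peval_add peval_smult) (simp add: vec.scale_minus_left)
qed

lemma peval_monom: "peval A (monom c k) u = c *s (((*v) A) ^^ k) u"
proof -
  have "degree (monom c k) \<le> k" by (simp add: degree_monom_le)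
  then have "peval A (monom c k) u = (\<Sum>j\<le>k. coeff (monom c k) j *s (((*v) A) ^^ j) u)"
    by (rule peval_bound)
  also have "\<dots> = (\<Sum>j\<le>k. (if j = k then c *s (((*v) A) ^^ j) u else 0))"
    by (intro sum.cong refl) (auto simp: coeff_monom)
  also have "\<dots> = c *s (((*v) A) ^^ k) u" by simp
  finally show ?thesis .
qed

lemma krylov_dep: fixes A :: "complex^'n^'n"
  shows "\<exists>p. p \<noteq> 0 \<and> peval A p w = 0"
proof -
  define N where "N = CARD('n)"
  define f where "f k = (((*v) A) ^^ k) w" for k
  show ?thesis
  proof (cases "inj_on f {..N}")
    case False
    then obtain i j where ij: "i \<noteq> j" "f i = f j" by (auto simp: inj_on_def)
    let ?p = "monom (1::complex) i - monom 1 j"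
    have "coeff ?p i = 1" using ij by (simp add: coeff_monom)
    then have "?p \<noteq> 0" by (metis coeff_0 one_neq_zero)
    moreover have "peval A ?p w = 0" using ij by (simp add: peval_diff peval_monom f_def)
    ultimately show ?thesis by blast
  next
    case True
    let ?S = "f ` {..N}"
    have cS: "card ?S = Suc N" using True by (simp add: card_image)
    have "\<not> vec.independent ?S"
    proof
      assume ind: "vec.independent ?S"
      have "card ?S \<le> vec.dim ?S" using vec.independent_bound_general[OF ind] by simp
      also have "\<dots> \<le> vec.dim (UNIV :: (complex^'n) set)" by (rule vec.dim_subset) simp
      also have "\<dots> = N" by (simp add: N_def card_cart_basis)
      finally show False using cS by simp
    qed
    then obtain t u where t: "finite t" "t \<subseteq> ?S" "(\<Sum>v\<in>t. u v *s v) = 0" and v: "\<exists>v\<in>t. u v \<noteq> 0"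
      unfolding vec.dependent_explicit by blast
    define K where "K = {k \<in> {..N}. f k \<in> t}"
    have finK: "finite K" by (simp add: K_def)
    define p where "p = (\<Sum>k\<in>K. monom (u (f k)) k)"
    have cp: "coeff p k = (if k \<in> K then u (f k) else 0)" for k
      unfolding p_def coeff_sum by (simp add: coeff_monom finK sum.delta' cong: if_cong)
    have dp: "degree p \<le> N"
    proof (rule degree_le)
      show "\<forall>i>N. coeff p i = 0" by (auto simp: cp K_def)
    qed
    have injK: "inj_on f K" using True by (rule inj_on_subset) (auto simp: K_def)
    have fK: "f ` K = t" using t(2) by (auto simp: K_def)
    have "peval A p w = (\<Sum>k\<le>N. coeff p k *s f k)"
      by (simp add: peval_bound[OF dp] f_def)
    also have "\<dots> = (\<Sum>k\<in>K. u (f k) *s f k)"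
      by (rule sum.mono_neutral_cong_right) (auto simp: cp K_def)
    also have "\<dots> = (\<Sum>v\<in>t. u v *s v)"
      using sum.reindex[OF injK, of "\<lambda>v. u v *s v"] fK by simp
    also have "\<dots> = 0" by (rule t(3))
    finally have "peval A p w = 0" .
    moreover have "p \<noteq> 0"
    proof -
      from v obtain v where "v \<in> t" "u v \<noteq> 0" by blast
      then obtain k where "k \<in> K" "f k = v" using fK by blast
      then have "coeff p k \<noteq> 0" using \<open>u v \<noteq> 0\<close> by (simp add: cp)
      then show ?thesis by auto
    qed
    ultimately show ?thesis by blast
  qed
qed

lemma eig_in_invariant:
  fixes A :: "complex^'n^'n"
  assumes "vec.subspace W" "\<forall>v\<in>W. A *v v \<in> W" "w \<in> W" "w \<noteq> 0"
  shows "\<exists>v z. v \<in> W \<and> v \<noteq> 0 \<and> A *v v = z *s v"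
  using krylov_dep[of A w] eig_from_poly[OF assms(1,2)] assms(3,4) by blast

lemma hip_skew:
  fixes \<Omega> :: "real^'n^'n"
  assumes skew: "transpose \<Omega> = - \<Omega>"
  shows "hip u (map_matrix complex_of_real \<Omega> *v w) = - hip (map_matrix complex_of_real \<Omega> *v u) w"
proof -
  have sk: "\<Omega>$j$i = - \<Omega>$i$j" for i j
    using arg_cong[OF skew, of "\<lambda>M. M$i$j"] by (simp add: transpose_def)
  have "hip (map_matrix complex_of_real \<Omega> *v u) w = (\<Sum>j\<in>UNIV. \<Sum>i\<in>UNIV. of_real (\<Omega>$j$i) * cnj (u$i) * w$j)"
    by (simp add: hip_def matrix_vector_mult_def cnj_sum sum_distrib_right)
  also have "\<dots> = - (\<Sum>i\<in>UNIV. \<Sum>j\<in>UNIV. cnj (u$i) * (of_real (\<Omega>$i$j) * w$j))"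
  proof -
    have e: "of_real (\<Omega>$j$i) * cnj (u$i) * w$j = - (cnj (u$i) * (of_real (\<Omega>$i$j) * w$j))" for i j
      by (simp add: sk[of i j])
    show ?thesis by (subst sum.swap) (simp add: e sum_negf)
  qed
  also have "\<dots> = - hip u (map_matrix complex_of_real \<Omega> *v w)"
    by (simp add: hip_def matrix_vector_mult_def sum_distrib_left)
  finally show ?thesis by simp
qed

definition onfam :: "complex^'n^'n \<Rightarrow> (complex^'n) set \<Rightarrow> bool" where
  "onfam A S \<longleftrightarrow> finite S \<and> (\<forall>s\<in>S. hip s s = 1 \<and> (\<exists>z. A *v s = z *s s)) \<and>
     (\<forall>s\<in>S. \<forall>s'\<in>S. s \<noteq> s' \<longrightarrow> hip s s' = 0)"

lemma onfam_hip: "onfam A S \<Longrightarrow> s \<in> S \<Longrightarrow> s' \<in> S \<Longrightarrow> hip s s' = (if s' = s then 1 else 0)"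
  unfolding onfam_def by auto

lemma onfam_indep: assumes "onfam A S" shows "vec.independent S"
proof -
  have fin: "finite S" using assms by (simp add: onfam_def)
  have "\<forall>v\<in>S. c v = 0" if "(\<Sum>v\<in>S. c v *s v) = 0" for c
  proof
    fix s assume s: "s \<in> S"
    have "0 = hip s (\<Sum>v\<in>S. c v *s v)" using that by simp
    also have "\<dots> = (\<Sum>v\<in>S. if v = s then c v else 0)"
      unfolding hip_sum_right hip_scale_right using onfam_hip[OF assms s] by (intro sum.cong) auto
    also have "\<dots> = c s" using s fin by (simp add: sum.delta)
    finally show "c s = 0" by simp
  qed
  then show ?thesis using fin by (simp add: vec.independent_explicit)
qed

lemma onfam_step:
  fixes \<Omega> :: "real^'n^'n"
  assumes skew: "transpose \<Omega> = - \<Omega>"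
  defines "A \<equiv> map_matrix complex_of_real \<Omega>"
  assumes S: "onfam A S" and cS: "card S < CARD('n)"
  shows "\<exists>S'. onfam A S' \<and> card S' = Suc (card S)"
proof -
  have fin: "finite S" using S by (simp add: onfam_def)
  have "vec.span S \<noteq> UNIV"
  proof
    assume "vec.span S = UNIV"
    then have "vec.dim (UNIV :: (complex^'n) set) \<le> card S"
      using vec.span_card_ge_dim[of S UNIV] fin by simp
    then show False using cS by (simp add: card_cart_basis)
  qed
  then obtain x where x: "x \<notin> vec.span S" by blast
  define w where "w = x - (\<Sum>s\<in>S. hip s x *s s)"
  have w0: "w \<noteq> 0"
  proof
    assume "w = 0"
    then have "x = (\<Sum>s\<in>S. hip s x *s s)" by (simp add: w_def)
    also have "\<dots> \<in> vec.span S"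
      by (intro vec.span_sum vec.span_scale vec.span_base)
    finally show False using x by simp
  qed
  define W where "W = {u. \<forall>s\<in>S. hip s u = 0}"
  have subW: "vec.subspace W"
    unfolding vec.subspace_def W_def by (simp add: hip_add_right hip_scale_right)
  have invW: "\<forall>v\<in>W. A *v v \<in> W"
  proof (intro ballI)
    fix v assume v: "v \<in> W"
    have "hip s (A *v v) = 0" if s: "s \<in> S" for s
    proof -
      obtain z where z: "A *v s = z *s s" using S s unfolding onfam_def by blast
      have "hip s (A *v v) = - hip (A *v s) v" unfolding A_def by (rule hip_skew[OF skew])
      also have "\<dots> = 0" using v s by (simp add: z hip_scale_left W_def)
      finally show ?thesis .
    qed
    then show "A *v v \<in> W" by (simp add: W_def)
  qed
  have wW: "w \<in> W"
  proof -
    have "hip s' w = 0" if s': "s' \<in> S" for s'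
    proof -
      have "hip s' w = hip s' x - (\<Sum>s\<in>S. if s = s' then hip s x else 0)"
        unfolding w_def hip_diff_right hip_sum_right hip_scale_right
        using onfam_hip[OF S s'] by (intro arg_cong2[where f=minus] refl sum.cong) auto
      also have "\<dots> = 0" using s' fin by (simp add: sum.delta)
      finally show ?thesis .
    qed
    then show ?thesis by (simp add: W_def)
  qed
  obtain v z where v: "v \<in> W" "v \<noteq> 0" "A *v v = z *s v"
    using eig_in_invariant[OF subW invW wW w0] by blast
  define r where "r = (\<Sum>i\<in>UNIV. (cmod (v$i))\<^sup>2)"
  have hv: "hip v v = of_real r" by (simp add: r_def hip_self)
  have r0: "r \<noteq> 0" using v(2) hv hip_self_eq_0[of v] by auto
  define c where "c = complex_of_real (1 / sqrt r)"
  define v' where "v' = c *s v"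
  have rpos: "r > 0" using r0 unfolding r_def by (metis (no_types, lifting) sum_nonneg zero_le_power2 order_le_less)
  have sq: "(complex_of_real (sqrt r))\<^sup>2 = complex_of_real r" using rpos by (simp flip: of_real_power)
  have hv': "hip v' v' = 1"
    unfolding v'_def hip_scale_left hip_scale_right hv c_def
    using rpos sq by (simp add: field_simps power2_eq_square[symmetric] flip: of_real_mult)
  have v'W: "v' \<in> W" unfolding v'_def by (rule vec.subspace_scale[OF subW v(1)])
  have ev': "A *v v' = z *s v'" unfolding v'_def by (simp add: vec.scale v(3) vector_smult_assoc mult.commute)
  have nS: "v' \<notin> S"
  proof
    assume "v' \<in> S"
    then have "hip v' v' = 0" using v'W by (simp add: W_def)
    then show False using hv' by simp
  qed
  have "onfam A (insert v' S)"
    unfolding onfam_def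
  proof (intro conjI ballI impI)
    show "finite (insert v' S)" using fin by simp
  next
    fix s assume "s \<in> insert v' S"
    then show "hip s s = 1"
      using S hv' by (auto simp: onfam_def)
  next
    fix s assume "s \<in> insert v' S"
    then show "\<exists>z. A *v s = z *s s"
      using S ev' unfolding onfam_def by blast
  next
    fix s s' assume s: "s \<in> insert v' S" and s': "s' \<in> insert v' S" and ne: "s \<noteq> s'"
    show "hip s s' = 0"
    proof (cases "s = v'")
      case True
      then have "s' \<in> S" using s' ne by auto
      then have "hip s' v' = 0" using v'W by (simp add: W_def)
      then show ?thesis using True hip_cnj[of s s'] by simp
    next
      case False
      then have sS: "s \<in> S" using s by auto
      show ?thesis
      proof (cases "s' = v'")
        case True
        then show ?thesis using v'W sS by (simp add: W_def)
      next
        case False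
        then show ?thesis using S sS s' ne by (auto simp: onfam_def)
      qed
    qed
  qed
  moreover have "card (insert v' S) = Suc (card S)" using fin nS by simp
  ultimately show ?thesis by blast
qed

lemma onfam_exists:
  fixes \<Omega> :: "real^'n^'n"
  assumes skew: "transpose \<Omega> = - \<Omega>"
  shows "k \<le> CARD('n) \<Longrightarrow> \<exists>S. onfam (map_matrix complex_of_real \<Omega>) S \<and> card S = k"
proof (induction k)
  case 0
  have "onfam (map_matrix complex_of_real \<Omega>) {}" by (simp add: onfam_def)
  then show ?case by force
next
  case (Suc k)
  then obtain S where "onfam (map_matrix complex_of_real \<Omega>) S" "card S = k" by auto
  with onfam_step[OF skew this(1)] Suc.prems show ?case by auto
qed

definition cadj :: "complex^'n^'n \<Rightarrow> complex^'n^'n" where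
  "cadj U = (\<chi> i j. cnj (U$j$i))"

theorem skew_diag:
  fixes \<Omega> :: "real^'n^'n"
  assumes skew: "transpose \<Omega> = - \<Omega>"
  shows "\<exists>U l. cadj U ** U = mat 1 \<and> U ** cadj U = mat 1 \<and>
     map_matrix complex_of_real \<Omega> = U ** diag_mat l ** cadj U \<and> (\<forall>k. Re (l k) = 0)"
proof -
  define A where "A = map_matrix complex_of_real \<Omega>"
  obtain S where S: "onfam A S" "card S = CARD('n)"
    using onfam_exists[OF skew, of "CARD('n)"] unfolding A_def by auto
  have fin: "finite S" using S by (simp add: onfam_def)
  obtain b where b: "bij_betw b (UNIV::'n set) S"
    using finite_same_card_bij[of "UNIV::'n set" S] fin S(2) by auto
  have bS: "b k \<in> S" for k using b by (auto simp: bij_betw_def)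
  have binj: "b j = b k \<longleftrightarrow> j = k" for j k using b by (auto simp: bij_betw_def inj_on_def)
  define l where "l k = (SOME z. A *v b k = z *s b k)" for k
  have ev: "A *v b k = l k *s b k" for k
  proof -
    have "\<exists>z. A *v b k = z *s b k" using S(1) bS[of k] unfolding onfam_def by blast
    then show ?thesis unfolding l_def by (rule someI_ex)
  qed
  define U where "U = (\<chi> i j. b j $ i)"
  have hb: "hip (b j) (b k) = (if j = k then 1 else 0)" for j k
    using onfam_hip[OF S(1) bS bS] binj by simp
  have UU: "cadj U ** U = mat 1"
    unfolding vec_eq_iff
  proof (intro allI)
    fix j k
    have "(cadj U ** U) $ j $ k = hip (b j) (b k)"
      by (simp add: cadj_def U_def matrix_matrix_mult_def hip_def)
    then show "(cadj U ** U) $ j $ k = mat 1 $ j $ k" by (simp add: hb mat_def)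
  qed
  have UU': "U ** cadj U = mat 1" using UU matrix_left_right_inverse by blast
  have AU: "A ** U = U ** diag_mat l"
    unfolding vec_eq_iff
  proof (intro allI)
    fix i j
    have "(A ** U) $ i $ j = (A *v b j) $ i"
      by (simp add: U_def matrix_matrix_mult_def matrix_vector_mult_def)
    also have "\<dots> = l j * b j $ i" by (simp add: ev)
    also have "\<dots> = (U ** diag_mat l) $ i $ j"
      by (simp add: U_def diag_mat_def matrix_matrix_mult_def mult.commute if_distrib cong: if_cong)
    finally show "(A ** U) $ i $ j = (U ** diag_mat l) $ i $ j" .
  qed
  have "A = A ** (U ** cadj U)" by (simp add: UU')
  also have "\<dots> = U ** diag_mat l ** cadj U" by (simp add: matrix_mul_assoc AU)
  finally have AD: "A = U ** diag_mat l ** cadj U" .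
  have im: "Re (l k) = 0" for k
  proof -
    have "hip (b k) (A *v b k) = l k" by (simp add: ev hip_scale_right hb)
    moreover have "hip (b k) (A *v b k) = - hip (A *v b k) (b k)"
      unfolding A_def by (rule hip_skew[OF skew])
    moreover have "hip (A *v b k) (b k) = cnj (l k)" by (simp add: ev hip_scale_left hb)
    ultimately have "l k = - cnj (l k)" by simp
    then have "Re (l k) = Re (- cnj (l k))" by simp
    then have "Re (l k) = - Re (l k)" by simp
    then show ?thesis by simp
  qed
  show ?thesis using UU UU' AD im unfolding A_def by blast
qed

lemma matrix_inv_props:
  fixes V :: "'a::semiring_1^'n^'n"
  assumes "invertible V"
  shows "V ** matrix_inv V = mat 1 \<and> matrix_inv V ** V = mat 1"
  using assms unfolding invertible_def matrix_inv_def by (rule someI_ex)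

lemma matrix_inv_unique:
  fixes V :: "'a::semiring_1^'n^'n"
  assumes "V ** U = mat 1" "U ** V = mat 1"
  shows "matrix_inv V = U"
proof -
  have inv: "invertible V" using assms unfolding invertible_def by blast
  note mi = matrix_inv_props[OF inv]
  have "matrix_inv V = matrix_inv V ** (V ** U)" by (simp add: assms)
  also have "\<dots> = (matrix_inv V ** V) ** U" by (simp add: matrix_mul_assoc)
  also have "\<dots> = U" using mi by simp
  finally show ?thesis .
qed

lemma diag_mult: "diag_mat a ** diag_mat b = diag_mat (\<lambda>k. a k * b k)"
proof -
  have e: "(if i = k then a i else 0) * (if k = j then b k else 0) =
     (if k = i then (if i = j then a i * b i else 0) else 0)" for i j k :: 'a
    by auto
  show ?thesis
    by (simp add: vec_eq_iff diag_mat_def matrix_matrix_mult_def e sum.delta')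
qed

lemma conj_mult:
  assumes "V ** W = mat 1"
  shows "(W ** D1 ** V) ** (W ** D2 ** V) = W ** (D1 ** D2) ** V"
proof -
  have "(W ** D1 ** V) ** (W ** D2 ** V) = W ** D1 ** (V ** W) ** D2 ** V"
    by (simp add: matrix_mul_assoc)
  also have "\<dots> = W ** (D1 ** D2) ** V" by (simp add: assms matrix_mul_assoc)
  finally show ?thesis .
qed

lemma group_inv_unique:
  fixes A X Y :: "'a::semiring_1^'n^'n"
  assumes X: "A ** X = X ** A" "X ** A ** X = X" "A ** X ** A = A"
  and Y: "A ** Y = Y ** A" "Y ** A ** Y = Y" "A ** Y ** A = A"
  shows "X = Y"
proof -
  have e1: "X ** A = (X ** A) ** (Y ** A)"
  proof -
    have "X ** A = X ** (A ** Y ** A)" using Y(3) by simp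
    then show ?thesis by (simp add: matrix_mul_assoc)
  qed
  have e2: "X ** A = (Y ** A) ** (X ** A)"
  proof -
    have "X ** A = (A ** Y ** A) ** X" using Y(3) X(1) by simp
    also have "\<dots> = (A ** Y) ** (A ** X)" by (simp add: matrix_mul_assoc)
    finally show ?thesis using X(1) Y(1) by simp
  qed
  have f1: "Y ** A = (Y ** A) ** (X ** A)"
  proof -
    have "Y ** A = Y ** (A ** X ** A)" using X(3) by simp
    then show ?thesis by (simp add: matrix_mul_assoc)
  qed
  have f2: "Y ** A = (X ** A) ** (Y ** A)"
  proof -
    have "Y ** A = (A ** X ** A) ** Y" using X(3) Y(1) by simp
    also have "\<dots> = (A ** X) ** (A ** Y)" by (simp add: matrix_mul_assoc)
    finally show ?thesis using X(1) Y(1) by simp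
  qed
  have ef: "X ** A = Y ** A" using e1 f2 by simp
  have "X = X ** (A ** X)" using X(2) by (simp add: matrix_mul_assoc)
  also have "\<dots> = X ** (Y ** A)" using X(1) ef by simp
  also have "\<dots> = X ** (A ** Y)" using Y(1) by simp
  also have "\<dots> = (X ** A) ** Y" by (simp add: matrix_mul_assoc)
  also have "\<dots> = (Y ** A) ** Y" using ef by simp
  also have "\<dots> = Y" using Y(2) by simp
  finally show ?thesis .
qed

lemma map_cnj_mult: "map_matrix cnj (A ** B) = map_matrix cnj A ** map_matrix cnj (B :: complex^'n^'n)"
  by (simp add: vec_eq_iff matrix_matrix_mult_def cnj_sum)

lemma map_real_mult: "map_matrix complex_of_real (A ** B) = map_matrix complex_of_real A ** map_matrix complex_of_real (B :: real^'n^'n)"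
  by (simp add: vec_eq_iff matrix_matrix_mult_def)

lemma map_real_inj: "map_matrix complex_of_real A = map_matrix complex_of_real B \<Longrightarrow> A = B"
  by (simp add: vec_eq_iff)

lemma map_real_vec: "(\<chi> i. complex_of_real ((A *v x) $ i)) = map_matrix complex_of_real A *v (\<chi> i. complex_of_real (x $ i))"
  by (simp add: vec_eq_iff matrix_vector_mult_def)

theorem omega_hat_inv_prop:
  fixes \<Omega> :: "real^'n^'n"
  assumes skew: "transpose \<Omega> = - \<Omega>"
  shows "\<Omega> ** \<Omega> ** omega_hat_inv \<Omega> = \<Omega>"
proof -
  let ?A = "map_matrix complex_of_real \<Omega>"
  let ?mu = "\<lambda>l::'n \<Rightarrow> complex. \<lambda>i. if l i = 0 then 0 else inverse (l i)"
  define P where "P M \<longleftrightarrow> (\<exists>(V::complex^'n^'n) l.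
      invertible V \<and> ?A = matrix_inv V ** diag_mat l ** V \<and>
      map_matrix complex_of_real M = matrix_inv V ** diag_mat (?mu l) ** V)" for M
  obtain U l where U: "cadj U ** U = mat 1" "U ** cadj U = mat 1" "?A = U ** diag_mat l ** cadj U"
    using skew_diag[OF skew] by blast
  have iv: "invertible (cadj U)" using U unfolding invertible_def by blast
  have mi: "matrix_inv (cadj U) = U" using U by (intro matrix_inv_unique) auto
  define N where "N = U ** diag_mat (?mu l) ** cadj U"
  have gi: "?A ** X = X ** ?A \<and> X ** ?A ** X = X \<and> ?A ** X ** ?A = ?A"
    if "?A = W ** diag_mat l' ** V" "X = W ** diag_mat (?mu l') ** V" "V ** W = mat 1" for X W V l'
  proof -
    have c1: "(\<lambda>k. l' k * ?mu l' k) = (\<lambda>k. ?mu l' k * l' k)" by (rule ext) simp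
    have c2: "(\<lambda>k. ?mu l' k * l' k * ?mu l' k) = ?mu l'" by (rule ext) simp
    have c3: "(\<lambda>k. l' k * ?mu l' k * l' k) = l'" by (rule ext) simp
    have c4: "(\<lambda>k. ?mu l' k * l' k * l' k) = l'" by (rule ext) simp
    show ?thesis unfolding that(1,2)
      by (simp only: conj_mult[OF that(3)] diag_mult c1 c2 c3 c4)
  qed
  have gN: "?A ** N = N ** ?A \<and> N ** ?A ** N = N \<and> ?A ** N ** ?A = ?A"
    by (rule gi[OF U(3) N_def U(1)])
  have cA: "map_matrix cnj ?A = ?A" by (simp add: vec_eq_iff)
  have gcN: "?A ** map_matrix cnj N = map_matrix cnj N ** ?A \<and>
      map_matrix cnj N ** ?A ** map_matrix cnj N = map_matrix cnj N \<and>
      ?A ** map_matrix cnj N ** ?A = ?A"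
    using gN by (metis cA map_cnj_mult)
  have NN: "map_matrix cnj N = N" using group_inv_unique gN gcN by metis
  define M where "M = map_matrix Re N"
  have MN: "map_matrix complex_of_real M = N"
  proof -
    have "cnj (N$i$j) = N$i$j" for i j using arg_cong[OF NN, of "\<lambda>X. X$i$j"] by simp
    then have "Im (N$i$j) = 0" for i j by (metis Reals_cnj_iff complex_is_Real_iff)
    then show ?thesis by (simp add: M_def vec_eq_iff complex_eq_iff)
  qed
  have "P M" unfolding P_def
  proof (intro exI conjI)
    show "invertible (cadj U)" by (rule iv)
    show "?A = matrix_inv (cadj U) ** diag_mat l ** cadj U" using U(3) by (simp only: mi)
    show "map_matrix complex_of_real M = matrix_inv (cadj U) ** diag_mat (?mu l) ** cadj U"
      using MN by (simp only: mi N_def)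
  qed
  then have "P (omega_hat_inv \<Omega>)" unfolding omega_hat_inv_def P_def by (rule someI)
  then obtain V l' where V: "invertible V" "?A = matrix_inv V ** diag_mat l' ** V"
      "map_matrix complex_of_real (omega_hat_inv \<Omega>) = matrix_inv V ** diag_mat (?mu l') ** V"
    unfolding P_def by blast
  have "?A ** ?A ** map_matrix complex_of_real (omega_hat_inv \<Omega>) = ?A"
    using gi[OF V(2,3)] matrix_inv_props[OF V(1)] by (metis matrix_mul_assoc)
  then show ?thesis by (intro map_real_inj) (simp add: map_real_mult)
qed


(* ---- from base/PM.thy ---- *)
lemma diag_one: "diag_mat (\<lambda>_. 1) = mat 1"
  by (simp add: vec_eq_iff diag_mat_def mat_def)

lemma map_real_one: "map_matrix complex_of_real (mat 1) = mat 1"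
  by (simp add: vec_eq_iff mat_def)

lemma mpow_0: "mpow A 0 = mat 1" by (simp add: mpow_def)
lemma mpow_Suc: "mpow A (Suc k) = mpow A k ** A" by (simp add: mpow_def)

lemma diag_sum: "finite K \<Longrightarrow> (\<Sum>k\<in>K. diag_mat (g k)) = diag_mat (\<lambda>j. \<Sum>k\<in>K. g k j)"
  by (induction K rule: finite_induct) (auto simp: vec_eq_iff diag_mat_def)

lemma diag_tendsto:
  assumes "\<And>j. ((\<lambda>n. S n j) \<longlongrightarrow> T j) F"
  shows "((\<lambda>n. diag_mat (S n)) \<longlongrightarrow> diag_mat T) F"
  unfolding diag_mat_def
  by (intro tendsto_vec_lambda) (auto simp: assms)

lemma diag_sums:
  assumes "\<And>j. (\<lambda>k. g k j) sums s j"
  shows "(\<lambda>k. diag_mat (g k)) sums diag_mat s"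
  unfolding sums_def diag_sum[OF finite_lessThan]
  by (rule diag_tendsto) (use assms in \<open>simp add: sums_def\<close>)

lemma map_Re_of_real: "map_matrix Re (map_matrix complex_of_real X) = X"
  by (simp add: vec_eq_iff)
lemma linear_map_Re: "linear (map_matrix Re :: complex^'n^'m \<Rightarrow> real^'n^'m)"
  by (rule linearI) (auto simp: vec_eq_iff)
lemma of_real_mult_scaleR: "complex_of_real (r * x) = r *\<^sub>R complex_of_real x"
  by (simp add: scaleR_conv_of_real)
lemma linear_map_of_real: "linear (map_matrix complex_of_real :: real^'n^'m \<Rightarrow> complex^'n^'m)"
  by (rule linearI) (simp_all add: vec_eq_iff of_real_mult_scaleR del: of_real_mult)
lemma bl_map_Re: "bounded_linear (map_matrix Re :: complex^'n^'m \<Rightarrow> real^'n^'m)"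
  using linear_map_Re linear_conv_bounded_linear by blast
lemma bl_map_of_real: "bounded_linear (map_matrix complex_of_real :: real^'n^'m \<Rightarrow> complex^'n^'m)"
  using linear_map_of_real linear_conv_bounded_linear by blast

lemma mm_scaleR_right: "(A::'a::real_algebra_1^'n^'m) ** (c *\<^sub>R B) = c *\<^sub>R (A ** B)"
  by (simp add: vec_eq_iff matrix_matrix_mult_def scaleR_sum_right)
lemma mm_scaleR_left: "(c *\<^sub>R A::'a::real_algebra_1^'n^'m) ** B = c *\<^sub>R (A ** B)"
  by (simp add: vec_eq_iff matrix_matrix_mult_def scaleR_sum_right)
lemma matrix_add_rdistrib': "((B + C) ** A) = (B ** A) + (C ** (A::'a::semiring_1^'n^'m))"
  by (vector matrix_matrix_mult_def sum.distrib[symmetric] field_simps)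
lemma linear_conjm: "linear (\<lambda>X::complex^'n^'n. U ** X ** V)"
  by (rule linearI) (simp_all add: matrix_add_ldistrib matrix_add_rdistrib' mm_scaleR_right mm_scaleR_left)
lemma bl_conjm: "bounded_linear (\<lambda>X::complex^'n^'n. U ** X ** V)"
  using linear_conjm linear_conv_bounded_linear by blast

lemma cadj_mult: "cadj (A ** B) = cadj B ** cadj A"
  by (simp add: vec_eq_iff cadj_def matrix_matrix_mult_def cnj_sum mult.commute)
lemma cadj_cadj: "cadj (cadj A) = A" by (simp add: vec_eq_iff cadj_def)
lemma cadj_diag: "cadj (diag_mat d) = diag_mat (\<lambda>k. cnj (d k))"
  by (simp add: vec_eq_iff cadj_def diag_mat_def)

lemma entry3: "(U ** diag_mat g ** W) $ i $ j = (\<Sum>k\<in>UNIV. U$i$k * g k * W$k$j)"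
proof -
  have e: "(\<Sum>n\<in>UNIV. U $ i $ n * (if n = k then g n else 0) * W$k$j) = U$i$k * g k * W$k$j" for k
  proof -
    have "(\<Sum>n\<in>UNIV. U $ i $ n * (if n = k then g n else 0) * W$k$j) = (\<Sum>n\<in>UNIV. if k = n then U$i$n * g n * W$k$j else 0)"
      by (intro sum.cong) auto
    then show ?thesis by (simp add: sum.delta)
  qed
  show ?thesis by (simp add: matrix_matrix_mult_def diag_mat_def e sum_distrib_right)
qed

lemma vec_lambda_has_vector_derivative:
  fixes g :: "'n::finite \<Rightarrow> real \<Rightarrow> real"
  assumes "\<And>i. ((g i) has_real_derivative g' i) (at t)"
  shows "((\<lambda>s. \<chi> i. g i s) has_vector_derivative (\<chi> i. g' i)) (at t)"
proof -
  have ex: "(\<chi> i. f i) = (\<Sum>i\<in>UNIV. f i *\<^sub>R axis i (1::real))" for f :: "'n \<Rightarrow> real"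
    using basis_expansion[of "\<chi> i. f i"] by (simp add: scalar_mult_eq_scaleR)
  have "((\<lambda>s. \<Sum>i\<in>UNIV. g i s *\<^sub>R axis i (1::real)) has_vector_derivative
      (\<Sum>i\<in>UNIV. g' i *\<^sub>R axis i 1)) (at t)"
    by (intro has_vector_derivative_sum) (auto intro!: derivative_eq_intros assms)
  then show ?thesis by (simp only: ex)
qed


context
  fixes \<Omega> :: "real^'n^'n" and U :: "complex^'n^'n" and l :: "'n \<Rightarrow> complex"
  assumes UU: "cadj U ** U = mat 1" and UU': "U ** cadj U = mat 1"
    and AD: "map_matrix complex_of_real \<Omega> = U ** diag_mat l ** cadj U"
    and Rel: "\<forall>k. Re (l k) = 0"
begin

definition Ec :: "real \<Rightarrow> complex^'n^'n" where
  "Ec t = U ** diag_mat (\<lambda>k. exp (t *\<^sub>R l k)) ** cadj U"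

lemma mpow_map: "map_matrix complex_of_real (mpow \<Omega> k) = U ** diag_mat (\<lambda>j. l j ^ k) ** cadj U"
proof (induction k)
  case 0
  show ?case by (simp add: mpow_0 map_real_one diag_one UU')
next
  case (Suc k)
  have "map_matrix complex_of_real (mpow \<Omega> (Suc k)) = U ** (diag_mat (\<lambda>j. l j ^ k) ** diag_mat l) ** cadj U"
    by (simp only: mpow_Suc map_real_mult Suc AD conj_mult[OF UU])
  also have "diag_mat (\<lambda>j. l j ^ k) ** diag_mat l = diag_mat (\<lambda>j. l j ^ Suc k)"
    by (subst diag_mult) (rule arg_cong[where f=diag_mat], rule ext, simp add: power_Suc2)
  finally show ?case .
qed

lemma mexp_map: "map_matrix complex_of_real (mexp \<Omega> t) = Ec t"
proof -
  define c where "c k = t ^ k / fact k" for k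
  have trm: "map_matrix complex_of_real (c k *\<^sub>R mpow \<Omega> k) =
      U ** diag_mat (\<lambda>j. (t *\<^sub>R l j) ^ k /\<^sub>R fact k) ** cadj U" for k
  proof -
    have "map_matrix complex_of_real (c k *\<^sub>R mpow \<Omega> k) = c k *\<^sub>R map_matrix complex_of_real (mpow \<Omega> k)"
      using linear_map_of_real by (rule linear_scale)
    also have "\<dots> = c k *\<^sub>R (U ** diag_mat (\<lambda>j. l j ^ k) ** cadj U)" by (simp add: mpow_map)
    also have "\<dots> = U ** (c k *\<^sub>R diag_mat (\<lambda>j. l j ^ k)) ** cadj U"
      by (simp add: mm_scaleR_right mm_scaleR_left)
    also have "c k *\<^sub>R diag_mat (\<lambda>j. l j ^ k) = diag_mat (\<lambda>j. c k *\<^sub>R l j ^ k)"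
      by (simp add: vec_eq_iff diag_mat_def)
    also have "(\<lambda>j. c k *\<^sub>R l j ^ k) = (\<lambda>j. (t *\<^sub>R l j) ^ k /\<^sub>R fact k)"
      by (rule ext) (simp add: c_def scaleR_conv_of_real power_mult_distrib field_simps)
    finally show ?thesis .
  qed
  have cs: "(\<lambda>k. map_matrix complex_of_real (c k *\<^sub>R mpow \<Omega> k)) sums Ec t"
    unfolding trm Ec_def
    by (intro bounded_linear.sums[OF bl_conjm] diag_sums exp_converges)
  have rs: "(\<lambda>k. c k *\<^sub>R mpow \<Omega> k) sums map_matrix Re (Ec t)"
    using bounded_linear.sums[OF bl_map_Re cs] by (simp only: map_Re_of_real)
  then have me: "mexp \<Omega> t = map_matrix Re (Ec t)"
    unfolding mexp_def c_def by (simp add: sums_iff)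
  have "(\<lambda>k. map_matrix complex_of_real (c k *\<^sub>R mpow \<Omega> k)) sums map_matrix complex_of_real (mexp \<Omega> t)"
    using bounded_linear.sums[OF bl_map_of_real rs] me by simp
  with cs show ?thesis using sums_unique2 by blast
qed

lemma Ec_add: "Ec (s + t) = Ec s ** Ec t"
  by (simp add: Ec_def conj_mult[OF UU] diag_mult scaleR_add_left exp_add)

lemma Ec_0: "Ec 0 = mat 1"
  by (simp add: Ec_def diag_one UU')

lemma E_add: "mexp \<Omega> (s + t) = mexp \<Omega> s ** mexp \<Omega> t"
  by (rule map_real_inj) (simp add: map_real_mult mexp_map Ec_add)

lemma E_0: "mexp \<Omega> 0 = mat 1"
  by (rule map_real_inj) (simp add: mexp_map Ec_0 map_real_one)

lemma E_orth: "orthogonal_matrix (mexp \<Omega> t)"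
proof -
  have tr: "map_matrix complex_of_real (transpose (mexp \<Omega> t)) = cadj (Ec t)"
    unfolding mexp_map[symmetric] by (simp add: vec_eq_iff cadj_def transpose_def)
  have un: "cnj (exp (t *\<^sub>R l k)) * exp (t *\<^sub>R l k) = 1" for k
  proof -
    have "cnj (t *\<^sub>R l k) = - (t *\<^sub>R l k)" using Rel by (simp add: complex_eq_iff)
    then show ?thesis by (simp add: exp_cnj exp_minus_inverse mult.commute)
  qed
  have ce: "cadj (Ec t) = U ** diag_mat (\<lambda>k. cnj (exp (t *\<^sub>R l k))) ** cadj U"
    by (simp add: Ec_def cadj_mult cadj_cadj cadj_diag matrix_mul_assoc)
  have "cadj (Ec t) ** Ec t = mat 1"
    unfolding ce by (simp add: Ec_def conj_mult[OF UU] diag_mult un diag_one UU')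
  then have "map_matrix complex_of_real (transpose (mexp \<Omega> t) ** mexp \<Omega> t) = map_matrix complex_of_real (mat 1)"
    by (simp add: map_real_mult tr mexp_map map_real_one)
  then show ?thesis unfolding orthogonal_matrix by (rule map_real_inj)
qed


lemma E_orthT: "orthogonal_transformation (\<lambda>x. mexp \<Omega> t *v x)"
proof -
  have "linear (\<lambda>x. mexp \<Omega> t *v x)" by (rule matrix_vector_mul_linear)
  moreover have "matrix (\<lambda>x. mexp \<Omega> t *v x) = mexp \<Omega> t" by (rule matrix_of_matrix_vector_mul)
  ultimately show ?thesis unfolding orthogonal_transformation_matrix using E_orth by simp
qed

lemma E_norm: "norm (mexp \<Omega> t *v x) = norm x"
  using E_orthT orthogonal_transformation by blast

lemma E_inner: "(mexp \<Omega> t *v x) \<bullet> (mexp \<Omega> t *v y) = x \<bullet> y"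
  using E_orthT unfolding orthogonal_transformation_def by blast

lemma E_entry: "mexp \<Omega> t $ i $ j = Re (\<Sum>k\<in>UNIV. U$i$k * exp (t *\<^sub>R l k) * cnj (U$j$k))"
proof -
  have "complex_of_real (mexp \<Omega> t $ i $ j) = Ec t $ i $ j"
    using arg_cong[OF mexp_map[of t], of "\<lambda>X. X$i$j"] by simp
  moreover have "Ec t $ i $ j = (\<Sum>k\<in>UNIV. U$i$k * exp (t *\<^sub>R l k) * cnj (U$j$k))"
    by (simp add: Ec_def entry3 cadj_def)
  ultimately show ?thesis by (metis Re_complex_of_real)
qed

lemma E_cont: "continuous_on UNIV (\<lambda>t. mexp \<Omega> t)"
proof -
  have eq: "(\<lambda>t. mexp \<Omega> t) = (\<lambda>t. \<chi> i j. Re (\<Sum>k\<in>UNIV. U$i$k * exp (t *\<^sub>R l k) * cnj (U$j$k)))"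
    by (rule ext) (simp only: vec_eq_iff vec_lambda_beta E_entry simp_thms)
  have c: "continuous_on UNIV (\<lambda>t. exp (t *\<^sub>R l k))" for k
    by (intro continuous_intros)
  show ?thesis unfolding eq
    by (intro continuous_on_vec_lambda continuous_on_Re continuous_on_sum continuous_on_mult c continuous_on_const)
qed

lemma E_Omega_entry: "(mexp \<Omega> t ** \<Omega>) $ i $ j = Re (\<Sum>k\<in>UNIV. U$i$k * (exp (t *\<^sub>R l k) * l k) * cnj (U$j$k))"
proof -
  have "map_matrix complex_of_real (mexp \<Omega> t ** \<Omega>) = U ** diag_mat (\<lambda>k. exp (t *\<^sub>R l k) * l k) ** cadj U"
    by (simp add: map_real_mult mexp_map AD Ec_def conj_mult[OF UU] diag_mult)
  from arg_cong[OF this, of "\<lambda>X. X$i$j"]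
  have "complex_of_real ((mexp \<Omega> t ** \<Omega>) $ i $ j) = (\<Sum>k\<in>UNIV. U$i$k * (exp (t *\<^sub>R l k) * l k) * cnj (U$j$k))"
    by (simp add: entry3 cadj_def)
  then show ?thesis by (metis Re_complex_of_real)
qed


lemma E_deriv: "((\<lambda>s. mexp \<Omega> (-s) *v w) has_vector_derivative (- (mexp \<Omega> (-t) *v (\<Omega> *v w)))) (at t)"
proof -
  define g where "g i s = (\<Sum>j\<in>UNIV. Re (\<Sum>k\<in>UNIV. U$i$k * exp (s *\<^sub>R (- l k)) * cnj (U$j$k)) * w$j)" for i s
  define g' where "g' i = (\<Sum>j\<in>UNIV. Re (\<Sum>k\<in>UNIV. U$i$k * (exp (t *\<^sub>R (- l k)) * (- l k)) * cnj (U$j$k)) * w$j)" for i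
  have f: "(\<lambda>s. mexp \<Omega> (-s) *v w) = (\<lambda>s. \<chi> i. g i s)"
    by (simp add: vec_eq_iff g_def matrix_vector_mult_def E_entry)
  have d: "((g i) has_real_derivative g' i) (at t)" for i
  proof -
    have "((\<lambda>s. \<Sum>j\<in>UNIV. Re (\<Sum>k\<in>UNIV. U$i$k * exp (s *\<^sub>R (- l k)) * cnj (U$j$k)) * w$j)
       has_vector_derivative g' i) (at t)"
      unfolding g'_def
      by (intro has_vector_derivative_sum has_vector_derivative_mult_left
          bounded_linear.has_vector_derivative[OF bounded_linear_Re]
          has_vector_derivative_mult_right exp_scaleR_has_vector_derivative_right)
    then show ?thesis unfolding g_def has_real_derivative_iff_has_vector_derivative .
  qed
  have "g' = (\<lambda>i. - (mexp \<Omega> (-t) *v (\<Omega> *v w)) $ i)"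
  proof
    fix i
    have "(mexp \<Omega> (-t) *v (\<Omega> *v w)) $ i = ((mexp \<Omega> (-t) ** \<Omega>) *v w) $ i"
      by (simp add: matrix_vector_mul_assoc)
    also have "\<dots> = (\<Sum>j\<in>UNIV. Re (\<Sum>k\<in>UNIV. U$i$k * (exp ((-t) *\<^sub>R l k) * l k) * cnj (U$j$k)) * w$j)"
      by (simp add: matrix_vector_mult_def E_Omega_entry)
    finally have c: "(mexp \<Omega> (-t) *v (\<Omega> *v w)) $ i = (\<Sum>j\<in>UNIV. Re (\<Sum>k\<in>UNIV. U$i$k * (exp ((-t) *\<^sub>R l k) * l k) * cnj (U$j$k)) * w$j)" .
    have e: "U$i$k * (exp (t *\<^sub>R (- l k)) * (- l k)) * cnj (U$j$k) = - (U$i$k * (exp ((-t) *\<^sub>R l k) * l k) * cnj (U$j$k))" for j k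
      by simp
    show "g' i = - (mexp \<Omega> (-t) *v (\<Omega> *v w)) $ i"
      unfolding c by (simp only: g'_def e sum_negf uminus_complex.sel mult_minus_left)
  qed
  then have "(\<chi> i. g' i) = - (mexp \<Omega> (-t) *v (\<Omega> *v w))" by (simp add: vec_eq_iff)
  with vec_lambda_has_vector_derivative[of g g' t, OF d] f show ?thesis by simp
qed


end


(* ---- from base/PA.thy ---- *)
context
  fixes g :: "real \<Rightarrow> 'a::euclidean_space" and B :: real
  assumes cont: "continuous_on UNIV g" and bnd: "\<And>t. norm (g t) \<le> B"
begin

definition "II a b = integral {a..b} g"

lemma II_combine: "a \<le> b \<Longrightarrow> b \<le> c \<Longrightarrow> II a b + II b c = II a c"
  unfolding II_def
  using Henstock_Kurzweil_Integration.integral_combine[where a=a and c=b and b=c and f=g] by (auto intro: integrable_continuous_interval continuous_on_subset[OF cont])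

lemma II_bound: "a \<le> b \<Longrightarrow> norm (II a b) \<le> B * (b - a)"
  unfolding II_def
  by (rule integral_bound) (auto intro: continuous_on_subset[OF cont] bnd)

lemma K1:
  assumes T: "T \<ge> L" and tau: "a \<le> \<tau>" "\<tau> \<le> a + L" and ap: "\<And>t. norm (g (t + \<tau>) - g t) \<le> \<epsilon>"
  shows "norm (II a (a + T) - II 0 T) \<le> \<epsilon> * T + 2 * B * L"
proof -
  have L0: "L \<ge> 0" using tau by simp
  have T0: "T \<ge> 0" using T L0 by simp
  have sh: "integral {\<tau>..\<tau> + T} g = integral {0..T} (\<lambda>t. g (t + \<tau>))"
    using integral_shift_real_ivl[where a="\<tau>" and b="\<tau> + T" and c="\<tau>" and f=g] by simp
  have "norm (II \<tau> (\<tau> + T) - II 0 T) = norm (integral {0..T} (\<lambda>t. g (t + \<tau>) - g t))"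
    unfolding II_def sh
    by (subst integral_diff) (auto intro!: integrable_continuous_interval continuous_intros
        continuous_on_compose2[OF cont] continuous_on_subset[OF cont])
  also have "\<dots> \<le> \<epsilon> * (T - 0)"
    by (rule integral_bound) (auto intro!: continuous_intros continuous_on_compose2[OF cont] ap
        continuous_on_subset[OF cont] T0)
  finally have e1: "norm (II \<tau> (\<tau> + T) - II 0 T) \<le> \<epsilon> * T" by simp
  have c1: "II a (a + T) = II a \<tau> + II \<tau> (a + T)" using tau T by (simp add: II_combine)
  have c2: "II \<tau> (\<tau> + T) = II \<tau> (a + T) + II (a + T) (\<tau> + T)" using tau T by (simp add: II_combine)
  have "norm (II a (a + T) - II \<tau> (\<tau> + T)) = norm (II a \<tau> - II (a + T) (\<tau> + T))"
    unfolding c1 c2 by (simp add: algebra_simps)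
  also have "\<dots> \<le> norm (II a \<tau>) + norm (II (a + T) (\<tau> + T))" by (rule norm_triangle_ineq4)
  also have "\<dots> \<le> B * (\<tau> - a) + B * ((\<tau> + T) - (a + T))"
    using tau by (intro add_mono II_bound) auto
  also have "\<dots> \<le> 2 * B * L"
  proof -
    have B0: "B \<ge> 0" using bnd[of 0] norm_ge_zero[of "g 0"] by linarith
    have "B * (\<tau> - a) \<le> B * L" using tau B0 by (intro mult_left_mono) auto
    then show ?thesis by simp
  qed
  finally have e2: "norm (II a (a + T) - II \<tau> (\<tau> + T)) \<le> 2 * B * L" .
  have "norm (II a (a + T) - II 0 T) \<le> norm (II a (a + T) - II \<tau> (\<tau> + T)) + norm (II \<tau> (\<tau> + T) - II 0 T)"
    using norm_triangle_ineq[of "II a (a + T) - II \<tau> (\<tau> + T)" "II \<tau> (\<tau> + T) - II 0 T"] by simp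
  then show ?thesis using e1 e2 by simp
qed

lemma B0: "B \<ge> 0" using bnd[of 0] norm_ge_zero[of "g 0"] by linarith

lemma K2:
  assumes K: "K \<ge> L" and ap: "\<forall>a. \<exists>\<tau>. a \<le> \<tau> \<and> \<tau> \<le> a + L \<and> (\<forall>t. norm (g (t + \<tau>) - g t) \<le> \<epsilon>)"
  shows "norm (II 0 (real q * K) - real q *\<^sub>R II 0 K) \<le> real q * (\<epsilon> * K + 2 * B * L)"
proof (induction q)
  case 0
  then show ?case by (simp add: II_def)
next
  case (Suc q)
  have L0: "L \<ge> 0" using ap by auto
  have K0: "K \<ge> 0" using K L0 by simp
  obtain \<tau> where tau: "real q * K \<le> \<tau>" "\<tau> \<le> real q * K + L" "\<forall>t. norm (g (t + \<tau>) - g t) \<le> \<epsilon>"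
    using ap by blast
  have k1: "norm (II (real q * K) (real q * K + K) - II 0 K) \<le> \<epsilon> * K + 2 * B * L"
    using K1[OF K tau(1,2)] tau(3) by blast
  have q0: "0 \<le> real q * K" using K0 by simp
  have sq: "real (Suc q) * K = real q * K + K" by (simp add: distrib_right)
  have c: "II 0 (real (Suc q) * K) = II 0 (real q * K) + II (real q * K) (real q * K + K)"
    unfolding sq using II_combine[OF q0, of "real q * K + K"] K0 by simp
  have "II 0 (real (Suc q) * K) - real (Suc q) *\<^sub>R II 0 K =
      (II 0 (real q * K) - real q *\<^sub>R II 0 K) + (II (real q * K) (real q * K + K) - II 0 K)"
    unfolding c by (simp add: algebra_simps)
  also have "norm \<dots> \<le> norm (II 0 (real q * K) - real q *\<^sub>R II 0 K) + norm (II (real q * K) (real q * K + K) - II 0 K)"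
    by (rule norm_triangle_ineq)
  also have "\<dots> \<le> real q * (\<epsilon> * K + 2 * B * L) + (\<epsilon> * K + 2 * B * L)"
    using Suc.IH k1 by (rule add_mono)
  finally show ?case by (simp add: algebra_simps)
qed

definition "avg T = (1 / T) *\<^sub>R II 0 T"

lemma K3:
  assumes K: "real K \<ge> L" "K \<ge> 1" and N: "N \<ge> 1"
    and ap: "\<forall>a. \<exists>\<tau>. a \<le> \<tau> \<and> \<tau> \<le> a + L \<and> (\<forall>t. norm (g (t + \<tau>) - g t) \<le> \<epsilon>)"
  shows "norm (avg (real N) - avg (real K)) \<le> \<epsilon> + 2 * B * L / K + 2 * B * K / N"
proof -
  have L0: "L \<ge> 0" using ap by auto
  have e0: "\<epsilon> \<ge> 0" using ap norm_ge_zero by (meson order_trans)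
  define q where "q = N div K"
  define r where "r = N mod K"
  have Nqr: "real N = real q * real K + real r"
    unfolding q_def r_def by (metis of_nat_add of_nat_mult div_mult_mod_eq)
  have rK: "real r \<le> real K" unfolding r_def using K(2) by simp
  have qK: "real q * real K \<le> real N" using Nqr by simp
  have r0: "real r \<ge> 0" by simp
  have c: "II 0 (real N) = II 0 (real q * real K) + II (real q * real K) (real N)"
    using qK by (simp add: II_combine)
  have bII: "norm (II (real q * real K) (real N)) \<le> B * real K"
  proof -
    have "norm (II (real q * real K) (real N)) \<le> B * (real N - real q * real K)"
      using qK by (rule II_bound)
    also have "\<dots> = B * real r" using Nqr by simp
    also have "\<dots> \<le> B * real K" using rK B0 by (rule mult_left_mono)
    finally show ?thesis .
  qed
  have bK: "norm (II 0 (real K)) \<le> B * real K" using II_bound[of 0 "real K"] by simp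
  define D where "D = II 0 (real N) - (real N / real K) *\<^sub>R II 0 (real K)"
  have D: "D = (II 0 (real q * real K) - real q *\<^sub>R II 0 (real K)) + II (real q * real K) (real N)
      - (real r / real K) *\<^sub>R II 0 (real K)"
    unfolding D_def c using K(2) by (simp add: Nqr add_divide_distrib scaleR_add_left algebra_simps)
  have "norm D \<le> norm (II 0 (real q * real K) - real q *\<^sub>R II 0 (real K)) + norm (II (real q * real K) (real N))
      + norm ((real r / real K) *\<^sub>R II 0 (real K))"
    unfolding D by (meson norm_triangle_ineq norm_triangle_ineq4 add_mono order_trans order_refl)
  also have "\<dots> \<le> real q * (\<epsilon> * real K + 2 * B * L) + B * real K + (real r / real K) * (B * real K)"
  proof -
    have "norm ((real r / real K) *\<^sub>R II 0 (real K)) = (real r / real K) * norm (II 0 (real K))"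
      using r0 by simp
    also have "\<dots> \<le> (real r / real K) * (B * real K)" using bK r0 by (intro mult_left_mono) auto
    finally show ?thesis using K2[OF K(1) ap, of q] bII by (intro add_mono) auto
  qed
  also have "\<dots> \<le> real q * (\<epsilon> * real K + 2 * B * L) + 2 * B * real K"
  proof -
    have "(real r / real K) * (B * real K) \<le> 1 * (B * real K)"
      using rK K(2) B0 by (intro mult_right_mono) (auto simp: divide_le_eq_1)
    then show ?thesis by simp
  qed
  finally have nD: "norm D \<le> real q * (\<epsilon> * real K + 2 * B * L) + 2 * B * real K" .
  have "avg (real N) - avg (real K) = (1 / real N) *\<^sub>R D"
    unfolding avg_def D_def using N K(2) by (simp add: scaleR_diff_right)
  then have "norm (avg (real N) - avg (real K)) = norm D / real N" using N by simp
  also have "\<dots> \<le> (real q * (\<epsilon> * real K + 2 * B * L) + 2 * B * real K) / real N"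
    using nD N by (simp add: divide_right_mono)
  also have "\<dots> = (real q * real K) / real N * (\<epsilon> + 2 * B * L / real K) + 2 * B * real K / real N"
  proof -
    have Kp: "real K > 0" using K(2) by simp
    have Np: "real N > 0" using N by simp
    show ?thesis using Kp Np by (simp add: field_simps)
  qed
  also have "\<dots> \<le> 1 * (\<epsilon> + 2 * B * L / real K) + 2 * B * real K / real N"
    using qK N e0 B0 L0 by (intro add_mono mult_right_mono) (auto simp: divide_le_eq_1)
  finally show ?thesis by simp
qed

lemma K4:
  assumes T: "T \<ge> 1" and n: "n = nat \<lfloor>T\<rfloor>"
  shows "norm (avg T - avg (real n)) \<le> 2 * B / T"
proof -
  have fl: "\<lfloor>T\<rfloor> \<ge> 1" using T by simp
  have rn: "real n = real_of_int \<lfloor>T\<rfloor>" unfolding n using fl by simp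
  have nT: "real n \<le> T" "T < real n + 1" "real n \<ge> 1" unfolding rn using fl
    by (simp_all add: of_int_floor_le real_of_int_floor_add_one_gt)
  have c: "II 0 T = II 0 (real n) + II (real n) T" using nT by (simp add: II_combine)
  have "avg T - avg (real n) = (1 / T) *\<^sub>R II (real n) T + (1 / T - 1 / real n) *\<^sub>R II 0 (real n)"
    unfolding avg_def c by (simp add: algebra_simps)
  also have "norm \<dots> \<le> norm ((1 / T) *\<^sub>R II (real n) T) + norm ((1 / T - 1 / real n) *\<^sub>R II 0 (real n))"
    by (rule norm_triangle_ineq)
  also have "\<dots> \<le> B / T + B / T"
  proof (rule add_mono)
    have "norm ((1 / T) *\<^sub>R II (real n) T) = (1 / T) * norm (II (real n) T)" using T by simp
    also have "\<dots> \<le> (1 / T) * (B * (T - real n))" using T nT by (intro mult_left_mono II_bound) auto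
    also have "\<dots> \<le> (1 / T) * (B * 1)" using T nT B0 by (intro mult_left_mono) auto
    finally show "norm ((1 / T) *\<^sub>R II (real n) T) \<le> B / T" by simp
  next
    have "norm ((1 / T - 1 / real n) *\<^sub>R II 0 (real n)) = \<bar>1 / T - 1 / real n\<bar> * norm (II 0 (real n))" by simp
    also have "\<dots> \<le> \<bar>1 / T - 1 / real n\<bar> * (B * real n)"
      using nT II_bound[of 0 "real n"] by (intro mult_left_mono) auto
    also have "\<bar>1 / T - 1 / real n\<bar> = (T - real n) / (T * real n)"
      using nT T by (simp add: field_simps abs_if)
    also have "(T - real n) / (T * real n) * (B * real n) = B * (T - real n) / T"
      using nT by (simp add: field_simps)
    also have "\<dots> \<le> B * 1 / T" using nT T B0 by (intro divide_right_mono mult_left_mono) auto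
    finally show "norm ((1 / T - 1 / real n) *\<^sub>R II 0 (real n)) \<le> B / T" by simp
  qed
  finally show ?thesis by simp
qed

theorem mean_exists:
  assumes ap: "\<forall>\<epsilon>>0. \<exists>L. \<forall>a. \<exists>\<tau>. a \<le> \<tau> \<and> \<tau> \<le> a + L \<and> (\<forall>t. norm (g (t + \<tau>) - g t) \<le> \<epsilon>)"
  shows "\<exists>c. ((\<lambda>T. (1 / T) *\<^sub>R integral {0..T} g) \<longlongrightarrow> c) at_top"
proof -
  have "Cauchy (\<lambda>n. avg (real n))"
  proof (rule CauchyI)
    fix e :: real assume e: "e > 0"
    then obtain L where L: "\<forall>a. \<exists>\<tau>. a \<le> \<tau> \<and> \<tau> \<le> a + L \<and> (\<forall>t. norm (g (t + \<tau>) - g t) \<le> e / 8)"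
      using ap by (meson divide_pos_pos zero_less_numeral)
    have L0: "L \<ge> 0" using L by auto
    obtain K :: nat where K: "real K > max 1 (max L (16 * B * L / e))" using reals_Archimedean2 by blast
    have K1': "K \<ge> 1" using K by simp
    have KL: "real K \<ge> L" using K by simp
    have t2: "2 * B * L / real K \<le> e / 8"
    proof -
      have "16 * B * L < e * real K" using K e by (simp add: field_simps)
      then show ?thesis using K by (simp add: field_simps)
    qed
    obtain M :: nat where M: "real M > max 1 (16 * B * real K / e)" using reals_Archimedean2 by blast
    have bnd': "norm (avg (real N) - avg (real K)) \<le> 3 * e / 8" if "N \<ge> M" for N
    proof -
      have N1: "N \<ge> 1" using M that by simp
      have t3: "2 * B * real K / real N \<le> e / 8"
      proof -
        have "real N \<ge> real M" using that by simp
        then have "e * real M \<le> e * real N" using e by (intro mult_left_mono) auto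
        moreover have "16 * B * real K < e * real M" using M e by (simp add: field_simps)
        ultimately have "16 * B * real K < e * real N" by linarith
        then show ?thesis using N1 by (simp add: field_simps)
      qed
      have "norm (avg (real N) - avg (real K)) \<le> e / 8 + 2 * B * L / real K + 2 * B * real K / real N"
        by (rule K3[OF KL K1' N1 L])
      then show ?thesis using t2 t3 by simp
    qed
    show "\<exists>M. \<forall>m\<ge>M. \<forall>n\<ge>M. norm (avg (real m) - avg (real n)) < e"
    proof (intro exI allI impI)
      fix m n assume "m \<ge> M" "n \<ge> M"
      have "norm (avg (real m) - avg (real n)) \<le> norm (avg (real m) - avg (real K)) + norm (avg (real n) - avg (real K))"
        using norm_triangle_ineq4[of "avg (real m) - avg (real K)" "avg (real n) - avg (real K)"] by simp
      also have "\<dots> \<le> 3 * e / 8 + 3 * e / 8" using bnd' \<open>m \<ge> M\<close> \<open>n \<ge> M\<close> by (intro add_mono) auto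
      finally show "norm (avg (real m) - avg (real n)) < e" using e by simp
    qed
  qed
  then obtain c where c: "(\<lambda>n. avg (real n)) \<longlonglongrightarrow> c" using Cauchy_convergent_iff convergent_def by blast
  have "(avg \<longlongrightarrow> c) at_top"
  proof (rule tendstoI)
    fix e :: real assume e: "e > 0"
    obtain no where no: "\<forall>n\<ge>no. dist (avg (real n)) c < e / 2"
      using c e unfolding lim_sequentially by (meson half_gt_zero)
    show "\<forall>\<^sub>F T in at_top. dist (avg T) c < e"
      unfolding eventually_at_top_linorder
    proof (intro exI allI impI)
      fix T assume T: "T \<ge> max (real no) (max 1 (4 * B / e + 1))"
      define n where "n = nat \<lfloor>T\<rfloor>"
      have T1: "T \<ge> 1" using T by simp
      have "n \<ge> no" using T unfolding n_def by (simp add: le_nat_floor)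
      then have d1: "dist (avg (real n)) c < e / 2" using no by blast
      have d2: "norm (avg T - avg (real n)) \<le> 2 * B / T" by (rule K4[OF T1 n_def])
      have "2 * B / T < e / 2"
      proof -
        have "4 * B / e < T" using T by simp
        then have "4 * B < e * T" using e by (simp add: field_simps)
        then show ?thesis using T1 by (simp add: field_simps)
      qed
      then have "dist (avg T) (avg (real n)) < e / 2" using d2 by (simp add: dist_norm)
      then show "dist (avg T) c < e" using d1 dist_triangle_half_l[of "avg T" "avg (real n)" e c]
        by (simp add: dist_commute)
    qed
  qed
  then show ?thesis unfolding avg_def II_def by blast
qed

end


(* ---- from base/PR.thy ---- *)
lemma cover_lemma:
  fixes g :: "real \<Rightarrow> 'b::heine_borel"
  assumes bd: "bounded (g ` T)" and e: "e > 0"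
  shows "\<exists>F. finite F \<and> F \<subseteq> T \<and> (\<forall>t\<in>T. \<exists>t'\<in>F. dist (g t) (g t') < e)"
proof -
  have "compact (closure (g ` T))" using bd by simp
  then obtain k where k0: "finite k" "closure (g ` T) \<subseteq> (\<Union>x\<in>k. ball x (e / 2))"
    unfolding compact_eq_totally_bounded using e by (meson half_gt_zero)
  have k: "finite k" "g ` T \<subseteq> (\<Union>x\<in>k. {y. dist x y < e / 2})"
    using k0 closure_subset[of "g ` T"] by (auto simp: ball_def)
  define k' where "k' = {x\<in>k. \<exists>t\<in>T. dist x (g t) < e / 2}"
  define r where "r x = (SOME t. t \<in> T \<and> dist x (g t) < e / 2)" for x
  have r: "r x \<in> T \<and> dist x (g (r x)) < e / 2" if "x \<in> k'" for x
    using that unfolding k'_def r_def by (metis (mono_tags, lifting) mem_Collect_eq someI_ex)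
  show ?thesis
  proof (intro exI conjI ballI)
    show "finite (r ` k')" using k(1) by (simp add: k'_def)
    show "r ` k' \<subseteq> T" using r by auto
  next
    fix t assume t: "t \<in> T"
    then obtain x where x: "x \<in> k" "dist x (g t) < e / 2" using k(2) by blast
    then have xk: "x \<in> k'" using t by (auto simp: k'_def)
    have "dist (g t) (g (r x)) \<le> dist (g t) x + dist x (g (r x))" by (rule dist_triangle)
    also have "\<dots> < e" using x(2) r[OF xk] by (simp add: dist_commute)
    finally show "\<exists>t'\<in>r ` k'. dist (g t) (g t') < e" using xk by blast
  qed
qed

lemma refine:
  fixes g :: "real \<Rightarrow> 'b::heine_borel"
  assumes fin: "finite S" and cov: "\<forall>t. \<exists>s\<in>S. P t s" and bd: "bounded (range g)" and e: "e > 0"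
  shows "\<exists>S'. finite S' \<and> (\<forall>t. \<exists>s'\<in>S'. \<exists>s\<in>S. P t s \<and> P s' s \<and> dist (g t) (g s') < e)"
proof -
  have "\<forall>s\<in>S. \<exists>F. finite F \<and> F \<subseteq> {t. P t s} \<and> (\<forall>t\<in>{t. P t s}. \<exists>t'\<in>F. dist (g t) (g t') < e)"
  proof
    fix s assume "s \<in> S"
    have "bounded (g ` {t. P t s})" using bd by (rule bounded_subset) auto
    then show "\<exists>F. finite F \<and> F \<subseteq> {t. P t s} \<and> (\<forall>t\<in>{t. P t s}. \<exists>t'\<in>F. dist (g t) (g t') < e)"
      using cover_lemma e by blast
  qed
  then obtain F where F: "\<forall>s\<in>S. finite (F s) \<and> F s \<subseteq> {t. P t s} \<and> (\<forall>t\<in>{t. P t s}. \<exists>t'\<in>F s. dist (g t) (g t') < e)"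
    by metis
  show ?thesis
  proof (intro exI conjI allI)
    show "finite (\<Union>s\<in>S. F s)" using fin F by auto
  next
    fix t
    obtain s where s: "s \<in> S" "P t s" using cov by blast
    then obtain t' where t': "t' \<in> F s" "dist (g t) (g t') < e" using F by blast
    then have "P t' s" using F s(1) by blast
    then show "\<exists>s'\<in>(\<Union>s\<in>S. F s). \<exists>s\<in>S. P t s \<and> P s' s \<and> dist (g t) (g s') < e"
      using s t' by blast
  qed
qed

lemma returns_cover:
  fixes E :: "real \<Rightarrow> 'b::heine_borel" and \<nu> :: "nat \<Rightarrow> real"
  assumes bd: "bounded (range E)"
  shows "\<delta> > 0 \<Longrightarrow> \<exists>S. finite S \<and> (\<forall>t. \<exists>s\<in>S. dist (E t) (E s) < \<delta> \<and>
           (\<forall>k<n. dist (cis (2 * pi * \<nu> k * t)) (cis (2 * pi * \<nu> k * s)) < \<delta>))"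
proof (induction n arbitrary: \<delta>)
  case 0
  obtain S' where S': "finite S'" "\<forall>t. \<exists>s'\<in>S'. \<exists>s\<in>{0::real}. True \<and> True \<and> dist (E t) (E s') < \<delta>"
    using refine[of "{0::real}" "\<lambda>_ _. True" E \<delta>] bd 0 by auto
  then show ?case by auto
next
  case (Suc n)
  have h: "\<delta> / 2 > 0" using Suc.prems by simp
  obtain S where S: "finite S" "\<forall>t. \<exists>s\<in>S. dist (E t) (E s) < \<delta> / 2 \<and>
           (\<forall>k<n. dist (cis (2 * pi * \<nu> k * t)) (cis (2 * pi * \<nu> k * s)) < \<delta> / 2)"
    using Suc.IH[OF h] by blast
  define P where "P t s \<longleftrightarrow> dist (E t) (E s) < \<delta> / 2 \<and>
           (\<forall>k<n. dist (cis (2 * pi * \<nu> k * t)) (cis (2 * pi * \<nu> k * s)) < \<delta> / 2)" for t s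
  have bc: "bounded (range (\<lambda>t. cis (2 * pi * \<nu> n * t)))"
    by (rule boundedI[where B=1]) auto
  obtain S' where S': "finite S'" "\<forall>t. \<exists>s'\<in>S'. \<exists>s\<in>S. P t s \<and> P s' s \<and>
      dist (cis (2 * pi * \<nu> n * t)) (cis (2 * pi * \<nu> n * s')) < \<delta>"
    using refine[OF S(1) _ bc Suc.prems, of P] S(2) unfolding P_def by blast
  show ?case
  proof (intro exI conjI allI)
    show "finite S'" by fact
  next
    fix t
    obtain s' s where ss: "s' \<in> S'" "s \<in> S" "P t s" "P s' s"
      "dist (cis (2 * pi * \<nu> n * t)) (cis (2 * pi * \<nu> n * s')) < \<delta>"
      using S'(2) by blast
    have "dist (E t) (E s') < \<delta>"
      using ss(3,4) dist_triangle_half_l[of "E t" "E s" \<delta> "E s'"] unfolding P_def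
      by (simp add: dist_commute)
    moreover have "dist (cis (2 * pi * \<nu> k * t)) (cis (2 * pi * \<nu> k * s')) < \<delta>" if k: "k < Suc n" for k
    proof (cases "k = n")
      case True
      then show ?thesis using ss(5) by simp
    next
      case False
      then have "k < n" using k by simp
      then show ?thesis using ss(3,4) unfolding P_def
        using dist_triangle_half_l[of "cis (2 * pi * \<nu> k * t)" "cis (2 * pi * \<nu> k * s)" \<delta>
            "cis (2 * pi * \<nu> k * s')"]
        by (simp add: dist_commute)
    qed
    ultimately show "\<exists>s\<in>S'. dist (E t) (E s) < \<delta> \<and>
           (\<forall>k<Suc n. dist (cis (2 * pi * \<nu> k * t)) (cis (2 * pi * \<nu> k * s)) < \<delta>)"
      using ss(1) by blast
  qed
qed

lemma cis_near:
  assumes e: "\<epsilon> > 0"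
  shows "\<exists>\<eta>>0. \<forall>x. cmod (cis x - 1) < \<eta> \<longrightarrow> (\<exists>m::int. \<bar>x - 2 * pi * of_int m\<bar> \<le> \<epsilon>)"
proof -
  define e' where "e' = min \<epsilon> (pi / 2)"
  have e'0: "e' > 0" "e' \<le> \<epsilon>" "e' < pi" using e pi_gt_zero unfolding e'_def by linarith+
  have "cos e' < cos 0" using e'0 by (intro cos_monotone_0_pi) auto
  then have eta: "1 - cos e' > 0" by simp
  show ?thesis
  proof (rule exI[of _ "1 - cos e'"], intro conjI allI impI)
    show "1 - cos e' > 0" by (rule eta)
  next
    fix x assume x: "cmod (cis x - 1) < 1 - cos e'"
    define m where "m = \<lfloor>x / (2 * pi) + 1 / 2\<rfloor>"
    define y where "y = x - 2 * pi * of_int m"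
    have "of_int m \<le> x / (2 * pi) + 1 / 2" "x / (2 * pi) + 1 / 2 < of_int m + 1"
      unfolding m_def by linarith+
    then have yb: "\<bar>y\<bar> \<le> pi" unfolding y_def using pi_gt_zero by (simp add: field_simps abs_le_iff)
    have cy: "cos x = cos y"
    proof -
      have "x = y + 2 * pi * of_int m" by (simp add: y_def)
      then show ?thesis using sin_cos_eq_iff[of x y] by blast
    qed
    have "1 - cos x \<le> cmod (cis x - 1)"
    proof -
      have "\<bar>Re (cis x - 1)\<bar> \<le> cmod (cis x - 1)" by (rule abs_Re_le_cmod)
      then show ?thesis by simp
    qed
    then have "1 - cos y < 1 - cos e'" using x cy by simp
    then have "cos e' < cos \<bar>y\<bar>" by simp
    have "\<bar>y\<bar> \<le> e'"
    proof (rule ccontr)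
      assume "\<not> \<bar>y\<bar> \<le> e'"
      then have "cos \<bar>y\<bar> < cos e'" using yb e'0 by (intro cos_monotone_0_pi) auto
      with \<open>cos e' < cos \<bar>y\<bar>\<close> show False by simp
    qed
    then have "\<bar>x - 2 * pi * of_int m\<bar> \<le> \<epsilon>" using e'0 unfolding y_def by linarith
    then show "\<exists>m::int. \<bar>x - 2 * pi * of_int m\<bar> \<le> \<epsilon>" by blast
  qed
qed

lemma mv_bound: "norm (A *v x) \<le> real CARD('n) * real CARD('m) * norm A * norm (x::real^'n)"
  for A :: "real^'n^'m"
proof -
  have "norm (A *v x) \<le> onorm ((*v) A) * norm x" by (rule onorm) simp
  also have "\<dots> \<le> (\<Sum>i\<in>UNIV. \<Sum>j\<in>UNIV. \<bar>A $ i $ j\<bar>) * norm x"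
    by (intro mult_right_mono onorm_le_matrix_component_sum) auto
  also have "(\<Sum>i\<in>UNIV. \<Sum>j\<in>UNIV. \<bar>A $ i $ j\<bar>) \<le> (\<Sum>i\<in>(UNIV::'m set). \<Sum>j\<in>(UNIV::'n set). norm A)"
  proof (intro sum_mono)
    fix i j
    have "\<bar>A $ i $ j\<bar> \<le> norm (A $ i)" by (rule component_le_norm_cart)
    also have "\<dots> \<le> norm A" by (rule Finite_Cartesian_Product.norm_nth_le)
    finally show "\<bar>A $ i $ j\<bar> \<le> norm A" .
  qed
  then have "(\<Sum>i\<in>UNIV. \<Sum>j\<in>UNIV. \<bar>A $ i $ j\<bar>) * norm x \<le> (real CARD('n) * real CARD('m) * norm A) * norm x"
    by (intro mult_right_mono) (auto simp: mult_ac)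
  finally show ?thesis .
qed

lemma returns:
  fixes E :: "real \<Rightarrow> real^'n^'n" and \<nu> :: "nat \<Rightarrow> real"
  assumes Eadd: "\<And>s t. E (s + t) = E s ** E t" and E0: "E 0 = mat 1"
    and En: "\<And>t y. norm (E t *v y) = norm y" and d: "\<delta> > 0"
  shows "\<exists>L. \<forall>a. \<exists>\<tau>. a \<le> \<tau> \<and> \<tau> \<le> a + L \<and> (\<forall>y. norm (E \<tau> *v y - y) \<le> \<delta> * norm y) \<and>
     (\<forall>k<n. \<exists>m::int. \<bar>\<nu> k * \<tau> - of_int m\<bar> \<le> \<delta>)"
proof -
  define C where "C = real CARD('n) * real CARD('n)"
  have C0: "C \<ge> 0" by (simp add: C_def)
  have ent: "\<bar>E t $ i $ j\<bar> \<le> 1" for t i j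
  proof -
    have "E t $ i $ j = (E t *v axis j 1) $ i"
      by (simp add: matrix_vector_mult_basis column_def)
    also have "\<bar>\<dots>\<bar> \<le> norm (E t *v axis j 1)" by (rule component_le_norm_cart)
    also have "\<dots> = 1" by (simp add: En)
    finally show ?thesis .
  qed
  have bd: "bounded (range E)"
  proof (rule boundedI[where B=C])
    fix A assume "A \<in> range E"
    then obtain t where A: "A = E t" by blast
    have "norm A = L2_set (\<lambda>i. norm (A $ i)) UNIV" by (simp add: norm_vec_def)
    also have "\<dots> \<le> (\<Sum>i\<in>UNIV. norm (A $ i))" by (rule L2_set_le_sum) simp
    also have "\<dots> \<le> (\<Sum>i\<in>(UNIV::'n set). \<Sum>j\<in>(UNIV::'n set). 1)"
    proof (rule sum_mono)
      fix i
      have "norm (A $ i) \<le> (\<Sum>j\<in>UNIV. \<bar>A $ i $ j\<bar>)" by (rule norm_le_l1_cart)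
      also have "\<dots> \<le> (\<Sum>j\<in>(UNIV::'n set). 1)" using ent A by (intro sum_mono) auto
      finally show "norm (A $ i) \<le> (\<Sum>j\<in>(UNIV::'n set). 1)" .
    qed
    also have "\<dots> = C" by (simp add: C_def)
    finally show "norm A \<le> C" .
  qed
  obtain \<eta> where eta: "\<eta> > 0" "\<forall>x. cmod (cis x - 1) < \<eta> \<longrightarrow> (\<exists>m::int. \<bar>x - 2 * pi * of_int m\<bar> \<le> 2 * pi * \<delta>)"
    using cis_near[of "2 * pi * \<delta>"] d by auto
  define d' where "d' = min (\<delta> / (C + 1)) \<eta>"
  have d'0: "d' > 0" using d eta C0 by (simp add: d'_def)
  obtain S where S: "finite S" "\<forall>t. \<exists>s\<in>S. dist (E t) (E s) < d' \<and>
           (\<forall>k<n. dist (cis (2 * pi * \<nu> k * t)) (cis (2 * pi * \<nu> k * s)) < d')"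
    using returns_cover[OF bd d'0] by blast
  have Sne: "S \<noteq> {}" using S(2) by blast
  define M where "M = Max (abs ` S)"
  have sM: "\<bar>s\<bar> \<le> M" if "s \<in> S" for s using S(1) that unfolding M_def by (intro Max_ge) auto
  show ?thesis
  proof (rule exI[of _ "2 * M"], intro allI)
    fix a
    define t where "t = a + M"
    obtain s where s: "s \<in> S" "dist (E t) (E s) < d'"
      "\<forall>k<n. dist (cis (2 * pi * \<nu> k * t)) (cis (2 * pi * \<nu> k * s)) < d'"
      using S(2) by blast
    define \<tau> where "\<tau> = t - s"
    have tb: "a \<le> \<tau>" "\<tau> \<le> a + 2 * M" using sM[OF s(1)] unfolding \<tau>_def t_def by linarith+
    have Ep: "norm (E \<tau> *v y - y) \<le> \<delta> * norm y" for y
    proof -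
      define z where "z = E (-s) *v y"
      have Et: "E \<tau> = E t ** E (-s)" unfolding \<tau>_def using Eadd[of t "-s"] by simp
      have Es: "E s *v z = y"
        unfolding z_def matrix_vector_mul_assoc Eadd[symmetric] by (simp add: E0)
      have "E \<tau> *v y - y = (E t - E s) *v z"
        unfolding Et z_def matrix_vector_mul_assoc[symmetric] using Es[unfolded z_def]
        by (simp add: matrix_vector_mult_diff_rdistrib)
      also have "norm \<dots> \<le> C * norm (E t - E s) * norm z"
        unfolding C_def by (rule mv_bound)
      also have "\<dots> = C * dist (E t) (E s) * norm y" by (simp add: z_def En dist_norm)
      also have "\<dots> \<le> C * (\<delta> / (C + 1)) * norm y"
        using s(2) C0 by (intro mult_right_mono mult_left_mono) (auto simp: d'_def)
      also have "\<dots> \<le> \<delta> * norm y"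
      proof -
        have "C * (\<delta> / (C + 1)) \<le> \<delta>" using C0 d by (simp add: field_simps)
        then show ?thesis by (intro mult_right_mono) auto
      qed
      finally show ?thesis .
    qed
    have Np: "\<exists>m::int. \<bar>\<nu> k * \<tau> - of_int m\<bar> \<le> \<delta>" if k: "k < n" for k
    proof -
      have ct: "cis (2 * pi * \<nu> k * t) = cis (2 * pi * \<nu> k * \<tau>) * cis (2 * pi * \<nu> k * s)"
        unfolding cis_mult \<tau>_def by (simp add: algebra_simps)
      have "cmod (cis (2 * pi * \<nu> k * \<tau>) - 1) = dist (cis (2 * pi * \<nu> k * t)) (cis (2 * pi * \<nu> k * s))"
      proof -
        have "cis (2 * pi * \<nu> k * \<tau>) * cis (2 * pi * \<nu> k * s) - cis (2 * pi * \<nu> k * s) =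
            (cis (2 * pi * \<nu> k * \<tau>) - 1) * cis (2 * pi * \<nu> k * s)" by (simp add: algebra_simps)
        then show ?thesis unfolding dist_norm ct by (simp add: norm_mult)
      qed
      also have "\<dots> < \<eta>" using s(3) k by (simp add: d'_def)
      finally obtain m :: int where m: "\<bar>2 * pi * \<nu> k * \<tau> - 2 * pi * of_int m\<bar> \<le> 2 * pi * \<delta>"
        using eta(2) by blast
      have "\<bar>2 * pi * \<nu> k * \<tau> - 2 * pi * of_int m\<bar> = 2 * pi * \<bar>\<nu> k * \<tau> - of_int m\<bar>"
        by (simp add: abs_mult right_diff_distrib[symmetric] mult.assoc)
      then have "\<bar>\<nu> k * \<tau> - of_int m\<bar> \<le> \<delta>" using m by simp
      then show ?thesis by blast
    qed
    show "\<exists>\<tau>. a \<le> \<tau> \<and> \<tau> \<le> a + 2 * M \<and> (\<forall>y. norm (E \<tau> *v y - y) \<le> \<delta> * norm y) \<and>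
     (\<forall>k<n. \<exists>m::int. \<bar>\<nu> k * \<tau> - of_int m\<bar> \<le> \<delta>)"
      using tb Ep Np by blast
  qed
qed


(* ---- from base/PF1.thy ---- *)
definition avlim :: "(real \<Rightarrow> 'a::euclidean_space) \<Rightarrow> 'a \<Rightarrow> bool" where
  "avlim g c \<longleftrightarrow> ((\<lambda>T. (1 / T) *\<^sub>R integral {0..T} g) \<longlongrightarrow> c) at_top"

lemma avlim_tavg: "avlim g c \<Longrightarrow> tavg g = c"
  unfolding avlim_def tavg_def by (rule tendsto_Lim) simp

lemma integrable_cont: "continuous_on UNIV g \<Longrightarrow> g integrable_on {a..b}"
  for g :: "real \<Rightarrow> 'a::euclidean_space"
  by (rule integrable_continuous_interval) (rule continuous_on_subset, auto)

lemma avlim_add: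
  assumes "continuous_on UNIV g" "continuous_on UNIV h" "avlim g a" "avlim h b"
  shows "avlim (\<lambda>t. g t + h t) (a + b)"
proof -
  have "(1 / T) *\<^sub>R integral {0..T} (\<lambda>t. g t + h t) = (1 / T) *\<^sub>R integral {0..T} g + (1 / T) *\<^sub>R integral {0..T} h" for T
    using integrable_cont[OF assms(1)] integrable_cont[OF assms(2)] by (simp add: integral_add scaleR_add_right)
  then show ?thesis using assms(3,4) unfolding avlim_def by (simp add: tendsto_add)
qed

lemma avlim_diff:
  assumes "continuous_on UNIV g" "continuous_on UNIV h" "avlim g a" "avlim h b"
  shows "avlim (\<lambda>t. g t - h t) (a - b)"
proof -
  have "(1 / T) *\<^sub>R integral {0..T} (\<lambda>t. g t - h t) = (1 / T) *\<^sub>R integral {0..T} g - (1 / T) *\<^sub>R integral {0..T} h" for T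
    using integrable_cont[OF assms(1)] integrable_cont[OF assms(2)] by (simp add: integral_diff scaleR_diff_right)
  then show ?thesis using assms(3,4) unfolding avlim_def by (simp add: tendsto_diff)
qed

lemma avlim_const: "avlim (\<lambda>t. c) c"
  unfolding avlim_def
proof (rule tendsto_eventually)
  show "\<forall>\<^sub>F T in at_top. (1 / T) *\<^sub>R integral {0..T} (\<lambda>t. c) = c"
    unfolding eventually_at_top_linorder by (rule exI[of _ 1]) simp
qed

lemma avlim_linear:
  assumes "bounded_linear L" "continuous_on UNIV g" "avlim g a"
  shows "avlim (\<lambda>t. L (g t)) (L a)"
proof -
  have "(1 / T) *\<^sub>R integral {0..T} (\<lambda>t. L (g t)) = L ((1 / T) *\<^sub>R integral {0..T} g)" for T
    using integral_linear[OF integrable_cont[OF assms(2)] assms(1), of 0 T]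
      linear_scale[OF bounded_linear.linear[OF assms(1)]] by (simp add: o_def)
  then show ?thesis using assms(3) bounded_linear.tendsto[OF assms(1)] unfolding avlim_def by simp
qed

lemma avlim_ge0:
  fixes g :: "real \<Rightarrow> real"
  assumes "continuous_on UNIV g" "\<And>t. g t \<ge> 0" "avlim g a"
  shows "a \<ge> 0"
proof (rule tendsto_le[OF _ assms(3)[unfolded avlim_def] tendsto_const])
  show "\<forall>\<^sub>F T in at_top. 0 \<le> (1 / T) *\<^sub>R integral {0..T} g"
    unfolding eventually_at_top_linorder
    by (rule exI[of _ 1]) (auto intro!: divide_nonneg_nonneg integral_nonneg integrable_cont[OF assms(1)] assms(2))
qed simp

lemma avlim_bounded_integral:
  assumes "\<And>T. T \<ge> 0 \<Longrightarrow> norm (integral {0..T} g) \<le> K"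
  shows "avlim g 0"
  unfolding avlim_def
proof (rule Lim_null_comparison)
  show "\<forall>\<^sub>F T in at_top. norm ((1 / T) *\<^sub>R integral {0..T} g) \<le> K / T"
    unfolding eventually_at_top_linorder
  proof (rule exI[of _ 1], intro allI impI)
    fix T :: real assume T: "T \<ge> 1"
    have "norm ((1 / T) *\<^sub>R integral {0..T} g) = norm (integral {0..T} g) / T" using T by simp
    also have "\<dots> \<le> K / T" using assms[of T] T by (intro divide_right_mono) auto
    finally show "norm ((1 / T) *\<^sub>R integral {0..T} g) \<le> K / T" .
  qed
  show "((\<lambda>T. K / T) \<longlongrightarrow> 0) at_top" by (rule tendsto_divide_0[OF tendsto_const filterlim_at_top_imp_at_infinity[OF filterlim_ident]])
qed


(* ---- from base/PF2.thy ---- *)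
lemma shift1:
  fixes Fh :: "'y \<Rightarrow> (nat \<Rightarrow> real) \<Rightarrow> 'z"
  assumes per: "\<forall>y \<theta> i. i < n \<longrightarrow> Fh y (\<theta>(i := \<theta> i + 1)) = Fh y \<theta>" and i: "i < n"
  shows "Fh y (\<theta>(i := \<theta> i + of_int m)) = Fh y \<theta>"
proof -
  have pos: "Fh y (\<theta>(i := \<theta> i + real k)) = Fh y \<theta>" for k :: nat and \<theta>
  proof (induction k)
    case 0 then show ?case by simp
  next
    case (Suc k)
    have eq: "\<theta>(i := \<theta> i + real (Suc k)) = (\<theta>(i := \<theta> i + real k))(i := (\<theta>(i := \<theta> i + real k)) i + 1)"
      by (rule ext) simp
    have upd: "Fh y ((\<theta>(i := \<theta> i + real k))(i := (\<theta>(i := \<theta> i + real k)) i + 1)) = Fh y (\<theta>(i := \<theta> i + real k))"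
      using per i by blast
    show ?case unfolding eq by (rule trans[OF upd Suc.IH])
  qed
  show ?thesis
  proof (cases "m \<ge> 0")
    case True
    then have "real (nat m) = of_int m" by simp
    then show ?thesis using pos[of \<theta> "nat m"] by (simp only:)
  next
    case False
    define \<theta>' where "\<theta>' = \<theta>(i := \<theta> i + of_int m)"
    have r: "real (nat (-m)) = - of_int m" using False by simp
    have "\<theta>'(i := \<theta>' i + real (nat (-m))) = \<theta>" unfolding r \<theta>'_def by (rule ext) simp
    then show ?thesis using pos[of \<theta>' "nat (-m)"] unfolding \<theta>'_def by (simp only:)
  qed
qed

lemma shiftn:
  fixes Fh :: "'y \<Rightarrow> (nat \<Rightarrow> real) \<Rightarrow> 'z"
  assumes per: "\<forall>y \<theta> i. i < n \<longrightarrow> Fh y (\<theta>(i := \<theta> i + 1)) = Fh y \<theta>"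
    and d: "\<forall>i<n. \<exists>m::int. \<theta>' i = \<theta> i + of_int m" and e: "\<forall>i. n \<le> i \<longrightarrow> \<theta>' i = \<theta> i"
  shows "Fh y \<theta>' = Fh y \<theta>"
proof -
  define th where "th j = (\<lambda>i. if i < j then \<theta>' i else \<theta> i)" for j
  have "j \<le> n \<Longrightarrow> Fh y (th j) = Fh y \<theta>" for j :: nat
  proof (induction j)
    case 0 then show ?case by (simp add: th_def)
  next
    case (Suc j)
    then have jn: "j < n" by simp
    obtain m :: int where m: "\<theta>' j = \<theta> j + of_int m" using d jn by blast
    have eq: "th (Suc j) = (th j)(j := th j j + of_int m)" by (auto simp: th_def fun_eq_iff m)
    have "Fh y (th (Suc j)) = Fh y (th j)" unfolding eq by (rule shift1[OF per jn])
    then show ?case using Suc by simp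
  qed
  moreover have "th n = \<theta>'" using e by (auto simp: th_def fun_eq_iff)
  ultimately show ?thesis by auto
qed

lemma dist_fun_le:
  fixes \<theta> \<theta>' :: "nat \<Rightarrow> real"
  assumes "\<forall>i. \<bar>\<theta> i - \<theta>' i\<bar> \<le> \<eta>"
  shows "dist \<theta> \<theta>' \<le> 2 * \<eta>"
proof -
  have h0: "\<eta> \<ge> 0" using assms by (meson abs_ge_zero order_trans)
  have le: "(1/2)^k * min (dist (\<theta> (from_nat k)) (\<theta>' (from_nat k))) 1 \<le> (1/2)^k * \<eta>" for k
    using assms by (intro mult_left_mono) (auto simp: dist_real_def min_le_iff_disj)
  have sg: "summable (\<lambda>k. (1/2::real)^k * \<eta>)" by (intro summable_mult2 summable_geometric) simp
  have sf: "summable (\<lambda>k. (1/2::real)^k * min (dist (\<theta> (from_nat k)) (\<theta>' (from_nat k))) 1)"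
    by (rule summable_comparison_test'[OF sg, of 0]) (use le in auto)
  have "dist \<theta> \<theta>' = (\<Sum>k. (1/2)^k * min (dist (\<theta> (from_nat k)) (\<theta>' (from_nat k))) 1)"
    by (simp add: dist_fun_def)
  also have "\<dots> \<le> (\<Sum>k. (1/2::real)^k * \<eta>)" by (rule suminf_le[OF le sf sg])
  also have "\<dots> = 2 * \<eta>" using suminf_geometric[of "1/2::real"] by (simp add: suminf_mult2[OF summable_geometric, symmetric])
  finally show ?thesis .
qed

lemma compact_box_fun:
  "compact (Pi\<^sub>E UNIV (\<lambda>i::nat. if i < n then {-1..2::real} else {0}))"
proof -
  have "compactin (product_topology (\<lambda>i. euclidean) UNIV) (Pi\<^sub>E UNIV (\<lambda>i::nat. if i < n then {-1..2::real} else {0}))"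
    unfolding compactin_PiE by auto
  then show ?thesis by (simp add: euclidean_product_topology)
qed

lemma mv_cont:
  fixes M :: "real \<Rightarrow> real^'n^'m"
  assumes "continuous_on S M" "continuous_on S w"
  shows "continuous_on S (\<lambda>t. M t *v w t)"
  unfolding matrix_vector_mult_def
  by (intro continuous_on_vec_lambda continuous_on_sum continuous_on_mult continuous_on_component assms)

lemma sqrt_sum_sq_le: "0 \<le> a \<Longrightarrow> 0 \<le> b \<Longrightarrow> sqrt (a\<^sup>2 + b\<^sup>2) \<le> a + (b::real)"
  by (rule real_le_lsqrt) (auto simp: power2_eq_square algebra_simps)

lemma skew_inner:
  fixes \<Omega> :: "real^'n^'n"
  assumes "transpose \<Omega> = - \<Omega>"
  shows "(\<Omega> *v a) \<bullet> b = - (a \<bullet> (\<Omega> *v b))"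
proof -
  have "(\<Omega> *v a) \<bullet> b = (a v* transpose \<Omega>) \<bullet> b" by simp
  also have "\<dots> = a \<bullet> (transpose \<Omega> *v b)" by (rule dot_lmul_matrix)
  also have "transpose \<Omega> *v b = - (\<Omega> *v b)" unfolding assms
    by (simp add: vec_eq_iff matrix_vector_mult_def sum_negf)
  finally show ?thesis by simp
qed


(* ---- from w/PF3.thy ---- *)
lemma f_ap:
  fixes \<Omega> :: "real^'d^'d" and F :: "real^'d \<Rightarrow> real \<Rightarrow> real^'d" and x :: "real^'d"
    and Fh :: "real^'d \<Rightarrow> (nat \<Rightarrow> real) \<Rightarrow> real^'d"
  assumes Eadd: "\<And>s t. mexp \<Omega> (s + t) = mexp \<Omega> s ** mexp \<Omega> t" and E0: "mexp \<Omega> 0 = mat 1"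
    and En: "\<And>t y. norm (mexp \<Omega> t *v y) = norm y"
    and Fhc: "continuous_on UNIV (\<lambda>(y, \<theta>). Fh y \<theta>)"
    and per: "\<forall>y \<theta> i. i < n \<longrightarrow> Fh y (\<theta>(i := \<theta> i + 1)) = Fh y \<theta>"
    and Feq: "\<forall>y t. F y t = Fh y (\<lambda>i. if i < n then \<nu> i * t else 0)"
    and e: "\<epsilon> > 0"
  shows "\<exists>L. \<forall>a. \<exists>\<tau>. a \<le> \<tau> \<and> \<tau> \<le> a + L \<and> (\<forall>y. norm (mexp \<Omega> \<tau> *v y - y) \<le> \<epsilon> * norm y) \<and>
     (\<forall>t. norm (F (mexp \<Omega> (t + \<tau>) *v x) (t + \<tau>) - F (mexp \<Omega> t *v x) t) \<le> \<epsilon>)"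
proof -
  define R where "R = norm x"
  define K where "K = Pi\<^sub>E UNIV (\<lambda>i::nat. if i < n then {-1..2::real} else {0})"
  have cK: "compact (cball (0::real^'d) R \<times> K)"
    unfolding K_def by (intro compact_Times compact_cball compact_box_fun)
  have "uniformly_continuous_on (cball (0::real^'d) R \<times> K) (\<lambda>(y, \<theta>). Fh y \<theta>)"
    by (rule compact_uniformly_continuous[OF continuous_on_subset[OF Fhc] cK]) simp
  then obtain d where d: "d > 0" "\<forall>p\<in>cball 0 R \<times> K. \<forall>p'\<in>cball 0 R \<times> K. dist p' p < d \<longrightarrow>
      dist ((\<lambda>(y, \<theta>). Fh y \<theta>) p') ((\<lambda>(y, \<theta>). Fh y \<theta>) p) < \<epsilon>"
    unfolding uniformly_continuous_on_def using e by blast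
  define \<delta> where "\<delta> = min (min (1/2) \<epsilon>) (d / (2 * (R + 2)))"
  have R0: "R \<ge> 0" by (simp add: R_def)
  have \<delta>0: "\<delta> > 0" using e d R0 by (simp add: \<delta>_def)
  have \<delta>m: "\<delta> \<le> min (1/2) \<epsilon>" unfolding \<delta>_def by (rule min.cobounded1)
  have \<delta>1: "\<delta> \<le> 1/2" "\<delta> \<le> \<epsilon>" using \<delta>m by linarith+
  have \<delta>d: "\<delta> * R + 2 * \<delta> < d"
  proof -
    have "\<delta> \<le> d / (2 * (R + 2))" by (simp add: \<delta>_def)
    then have "\<delta> * (R + 2) \<le> d / (2 * (R + 2)) * (R + 2)" using R0 by (intro mult_right_mono) auto
    also have "\<dots> = d / 2" using R0 by (simp add: field_simps)
    finally show ?thesis using d by (simp add: algebra_simps)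
  qed
  obtain L where L: "\<forall>a. \<exists>\<tau>. a \<le> \<tau> \<and> \<tau> \<le> a + L \<and> (\<forall>y. norm (mexp \<Omega> \<tau> *v y - y) \<le> \<delta> * norm y) \<and>
     (\<forall>k<n. \<exists>m::int. \<bar>\<nu> k * \<tau> - of_int m\<bar> \<le> \<delta>)"
    using returns[of "mexp \<Omega>", OF Eadd E0 En \<delta>0, of n \<nu>] by blast
  show ?thesis
  proof (rule exI[of _ L], intro allI)
    fix a
    obtain \<tau> where tau: "a \<le> \<tau>" "\<tau> \<le> a + L" "\<forall>y. norm (mexp \<Omega> \<tau> *v y - y) \<le> \<delta> * norm y"
      "\<forall>k<n. \<exists>m::int. \<bar>\<nu> k * \<tau> - of_int m\<bar> \<le> \<delta>"
      using L by blast
    obtain m :: "nat \<Rightarrow> int" where m: "\<forall>k<n. \<bar>\<nu> k * \<tau> - of_int (m k)\<bar> \<le> \<delta>"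
      using tau(4) by metis
    have fe: "norm (F (mexp \<Omega> (t + \<tau>) *v x) (t + \<tau>) - F (mexp \<Omega> t *v x) t) \<le> \<epsilon>" for t
    proof -
      define y where "y = mexp \<Omega> t *v x"
      define y' where "y' = mexp \<Omega> (t + \<tau>) *v x"
      have y'y: "y' = mexp \<Omega> \<tau> *v y"
        unfolding y'_def y_def using Eadd[of \<tau> t] by (simp add: add.commute matrix_vector_mul_assoc)
      define r where "r = (\<lambda>i. if i < n then frac (\<nu> i * t) else 0)"
      define \<theta>' where "\<theta>' = (\<lambda>i. if i < n then frac (\<nu> i * t) + (\<nu> i * \<tau> - of_int (m i)) else 0)"
      have F1: "F y t = Fh y r"
        unfolding Feq[rule_format]
      proof (rule shiftn[OF per])
        show "\<forall>i<n. \<exists>m::int. (if i < n then \<nu> i * t else 0) = r i + of_int m"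
          by (auto simp: r_def frac_def)
        show "\<forall>i. n \<le> i \<longrightarrow> (if i < n then \<nu> i * t else 0) = r i" by (simp add: r_def)
      qed
      have F2: "F y' (t + \<tau>) = Fh y' \<theta>'"
        unfolding Feq[rule_format]
      proof (rule shiftn[OF per])
        show "\<forall>i<n. \<exists>ma::int. (if i < n then \<nu> i * (t + \<tau>) else 0) = \<theta>' i + of_int ma"
        proof (intro allI impI)
          fix i assume "i < n"
          then have "\<nu> i * (t + \<tau>) = \<theta>' i + of_int (\<lfloor>\<nu> i * t\<rfloor> + m i)"
            by (simp add: \<theta>'_def frac_def algebra_simps)
          then have "(if i < n then \<nu> i * (t + \<tau>) else 0) = \<theta>' i + of_int (\<lfloor>\<nu> i * t\<rfloor> + m i)"
            using \<open>i < n\<close> by (simp only: if_True)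
          then show "\<exists>ma::int. (if i < n then \<nu> i * (t + \<tau>) else 0) = \<theta>' i + of_int ma" by blast
        qed
        show "\<forall>i. n \<le> i \<longrightarrow> (if i < n then \<nu> i * (t + \<tau>) else 0) = \<theta>' i" by (simp add: \<theta>'_def)
      qed
      have rK: "r \<in> K"
      proof -
        have "-1 \<le> frac (\<nu> i * t) \<and> frac (\<nu> i * t) \<le> 2" for i
          using frac_lt_1[of "\<nu> i * t"] frac_ge_0[of "\<nu> i * t"] by linarith
        then show ?thesis unfolding K_def r_def by auto
      qed
      have tK: "\<theta>' \<in> K"
      proof -
        have "-1 \<le> frac (\<nu> i * t) + (\<nu> i * \<tau> - of_int (m i)) \<and> frac (\<nu> i * t) + (\<nu> i * \<tau> - of_int (m i)) \<le> 2"
          if "i < n" for i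
        proof -
          have a: "\<bar>\<nu> i * \<tau> - of_int (m i)\<bar> \<le> \<delta>" using m that by blast
          have b: "0 \<le> frac (\<nu> i * t)" "frac (\<nu> i * t) < 1" by (simp_all add: frac_lt_1)
          show ?thesis using a b \<delta>1 unfolding abs_le_iff by linarith
        qed
        then show ?thesis unfolding K_def \<theta>'_def by auto
      qed
      have yB: "y \<in> cball 0 R" "y' \<in> cball 0 R" by (simp_all add: y_def y'_def En R_def)
      have d1: "dist y' y \<le> \<delta> * R"
        using tau(3)[rule_format, of y] unfolding y'y dist_norm by (simp add: y_def En R_def)
      have d2: "dist \<theta>' r \<le> 2 * \<delta>"
      proof (rule dist_fun_le, intro allI)
        fix i
        show "\<bar>\<theta>' i - r i\<bar> \<le> \<delta>" using m \<delta>0 by (cases "i < n") (auto simp: \<theta>'_def r_def)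
      qed
      have "dist (y', \<theta>') (y, r) \<le> dist y' y + dist \<theta>' r"
        unfolding dist_Pair_Pair by (rule sqrt_sum_sq_le) auto
      also have "\<dots> < d" using d1 d2 \<delta>d by linarith
      finally have "dist (Fh y' \<theta>') (Fh y r) < \<epsilon>" using d(2) yB rK tK by fastforce
      then show ?thesis using F1 F2 by (simp add: y_def y'_def dist_norm)
    qed
    show "\<exists>\<tau>. a \<le> \<tau> \<and> \<tau> \<le> a + L \<and> (\<forall>y. norm (mexp \<Omega> \<tau> *v y - y) \<le> \<epsilon> * norm y) \<and>
     (\<forall>t. norm (F (mexp \<Omega> (t + \<tau>) *v x) (t + \<tau>) - F (mexp \<Omega> t *v x) t) \<le> \<epsilon>)"
    proof (intro exI conjI allI)
      show "a \<le> \<tau>" "\<tau> \<le> a + L" by (fact tau(1), fact tau(2))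
    next
      fix y show "norm (mexp \<Omega> \<tau> *v y - y) \<le> \<epsilon> * norm y"
        using tau(3) \<delta>1(2) by (meson mult_right_mono norm_ge_zero order_trans)
    next
      fix t show "norm (F (mexp \<Omega> (t + \<tau>) *v x) (t + \<tau>) - F (mexp \<Omega> t *v x) t) \<le> \<epsilon>" by (rule fe)
    qed
  qed
qed


(* ---- from w/PF4.thy ---- *)
theorem theorem1:
  fixes \<Omega> :: "real^'d^'d"
    and F :: "real^'d \<Rightarrow> real \<Rightarrow> real^'d"
    and x :: "real^'d"
  assumes skew: "transpose \<Omega> = - \<Omega>"
    and F_bounded: "bounded (range (\<lambda>(y, t). F y t))"
    and F_cont: "continuous_on UNIV (\<lambda>(y, t). F y t)"
    and F_deriv: "\<exists>DF :: real^'d \<Rightarrow> real \<Rightarrow> ((real^'d) \<Rightarrow>\<^sub>L (real^'d)).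
        (\<forall>y t. ((\<lambda>z. F z t) has_derivative blinfun_apply (DF y t)) (at y)) \<and>
        continuous_on UNIV (\<lambda>(y, t). DF y t) \<and>
        bounded (range (\<lambda>(y, t). DF y t))"
    and F_qp: "\<exists>(n::nat) (\<nu>::nat \<Rightarrow> real) (Fh :: real^'d \<Rightarrow> (nat \<Rightarrow> real) \<Rightarrow> real^'d).
        continuous_on UNIV (\<lambda>(y, \<theta>). Fh y \<theta>) \<and>
        (\<forall>y \<theta> i. i < n \<longrightarrow> Fh y (\<theta>(i := \<theta> i + 1)) = Fh y \<theta>) \<and>
        (\<forall>y t. F y t = Fh y (\<lambda>i. if i < n then \<nu> i * t else 0))"
  shows "tinner (\<lambda>t. DcalF \<Omega> F x t - DcalG \<Omega> F x t) (DcalG \<Omega> F x) = 0 \<and>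
         (tnorm (DcalF \<Omega> F x))\<^sup>2 = (tnorm (DcalG \<Omega> F x))\<^sup>2 + (tnorm (\<lambda>t. DcalF \<Omega> F x t - DcalG \<Omega> F x t))\<^sup>2 \<and>
         tnorm (DcalG \<Omega> F x) \<le> tnorm (DcalF \<Omega> F x)"
proof -
  obtain U l where Ud: "cadj U ** U = mat 1" "U ** cadj U = mat 1"
      "map_matrix complex_of_real \<Omega> = U ** diag_mat l ** cadj U" "\<forall>k. Re (l k) = 0"
    using skew_diag[OF skew] by blast
  let ?E = "mexp \<Omega>"
  note Eadd = E_add[OF Ud] and E0 = E_0[OF Ud] and En = E_norm[OF Ud] and Ei = E_inner[OF Ud]
    and Ec = E_cont[OF Ud] and Ed = E_deriv[OF Ud]
  obtain B where B: "\<And>y t. norm (F y t) \<le> B"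
    using F_bounded unfolding bounded_iff by auto
  obtain n :: nat and \<nu> :: "nat \<Rightarrow> real" and Fh :: "real^'d \<Rightarrow> (nat \<Rightarrow> real) \<Rightarrow> real^'d" where qp: "continuous_on UNIV (\<lambda>(y, \<theta>). Fh y \<theta>)"
      "\<forall>y \<theta> i. i < n \<longrightarrow> Fh y (\<theta>(i := \<theta> i + 1)) = Fh y \<theta>"
      "\<forall>y t. F y t = Fh y (\<lambda>i. if i < n then \<nu> i * t else 0)"
    using F_qp by (elim exE conjE) blast
  define f where "f t = F (?E t *v x) t" for t
  have Ecx: "continuous_on UNIV (\<lambda>t. ?E t *v x)" by (intro mv_cont Ec continuous_on_const)
  have fc: "continuous_on UNIV f"
  proof -
    have "continuous_on UNIV (\<lambda>t. (\<lambda>(y, t). F y t) (?E t *v x, t))"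
      by (rule continuous_on_compose2[OF F_cont]) (auto intro!: continuous_on_Pair Ecx continuous_on_id)
    then show ?thesis by (simp add: f_def)
  qed
  have fB: "norm (f t) \<le> B" for t by (simp add: f_def B)
  have B0: "B \<ge> 0" using fB[of 0] norm_ge_zero by (meson order_trans)
  have ap: "\<exists>L. \<forall>a. \<exists>\<tau>. a \<le> \<tau> \<and> \<tau> \<le> a + L \<and> (\<forall>y. norm (?E \<tau> *v y - y) \<le> \<epsilon> * norm y) \<and>
     (\<forall>t. norm (f (t + \<tau>) - f t) \<le> \<epsilon>)" if "\<epsilon> > 0" for \<epsilon>
    using f_ap[of \<Omega>, OF Eadd E0 En qp(1,2,3) that, of x] unfolding f_def by blast
  \<comment> \<open>the three mean values\<close>
  define h where "h t = ?E (-t) *v f t" for t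
  define q where "q t = (norm (f t))\<^sup>2" for t
  have hc: "continuous_on UNIV h" unfolding h_def
    by (intro mv_cont fc continuous_on_compose2[OF Ec] continuous_intros) auto
  have qc: "continuous_on UNIV q" unfolding q_def by (intro continuous_intros fc)
  have hB: "norm (h t) \<le> B" for t by (simp add: h_def En fB)
  have qB: "norm (q t) \<le> B\<^sup>2" for t
    unfolding q_def using fB[of t] by (simp add: power_mono)
  obtain cf where cf: "avlim f cf"
  proof -
    have "\<forall>\<epsilon>>0. \<exists>L. \<forall>a. \<exists>\<tau>. a \<le> \<tau> \<and> \<tau> \<le> a + L \<and> (\<forall>t. norm (f (t + \<tau>) - f t) \<le> \<epsilon>)"
      using ap by (meson)
    then show ?thesis using mean_exists[OF fc fB] that unfolding avlim_def by blast
  qed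
  obtain cF where cF: "avlim h cF"
  proof -
    have "\<forall>\<epsilon>>0. \<exists>L. \<forall>a. \<exists>\<tau>. a \<le> \<tau> \<and> \<tau> \<le> a + L \<and> (\<forall>t. norm (h (t + \<tau>) - h t) \<le> \<epsilon>)"
    proof (intro allI impI)
      fix \<epsilon> :: real assume e: "\<epsilon> > 0"
      define e0 where "e0 = \<epsilon> / (B + 1)"
      have e0: "e0 > 0" using e B0 by (simp add: e0_def)
      obtain L where L: "\<forall>a. \<exists>\<tau>. a \<le> \<tau> \<and> \<tau> \<le> a + L \<and> (\<forall>y. norm (?E \<tau> *v y - y) \<le> e0 * norm y) \<and>
         (\<forall>t. norm (f (t + \<tau>) - f t) \<le> e0)" using ap[OF e0] by blast
      show "\<exists>L. \<forall>a. \<exists>\<tau>. a \<le> \<tau> \<and> \<tau> \<le> a + L \<and> (\<forall>t. norm (h (t + \<tau>) - h t) \<le> \<epsilon>)"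
      proof (rule exI[of _ L], intro allI)
        fix a
        obtain \<tau> where tau: "a \<le> \<tau>" "\<tau> \<le> a + L" "\<forall>y. norm (?E \<tau> *v y - y) \<le> e0 * norm y"
           "\<forall>t. norm (f (t + \<tau>) - f t) \<le> e0" using L by blast
        have "norm (h (t + \<tau>) - h t) \<le> \<epsilon>" for t
        proof -
          define u where "u = f (t + \<tau>)"
          have "h (t + \<tau>) - h t = ?E (-t) *v (?E (-\<tau>) *v u - f t)"
          proof -
            have "?E (- (t + \<tau>)) = ?E (-t) ** ?E (-\<tau>)" using Eadd[of "-t" "-\<tau>"] by simp
            then show ?thesis
              by (simp add: h_def u_def matrix_vector_mul_assoc matrix_vector_mult_diff_distrib)
          qed
          then have "norm (h (t + \<tau>) - h t) = norm (?E (-\<tau>) *v u - f t)" by (simp add: En)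
          also have "\<dots> \<le> norm (?E (-\<tau>) *v u - u) + norm (u - f t)"
            using norm_triangle_ineq[of "?E (-\<tau>) *v u - u" "u - f t"] by simp
          also have "norm (?E (-\<tau>) *v u - u) = norm (?E \<tau> *v u - u)"
          proof -
            have eq: "?E \<tau> ** ?E (-\<tau>) = mat 1" using Eadd[of \<tau> "-\<tau>"] E0 by simp
            have "?E \<tau> *v (?E (-\<tau>) *v u - u) = u - ?E \<tau> *v u"
              by (simp add: matrix_vector_mul_assoc matrix_vector_mult_diff_distrib eq)
            then have "norm (?E (-\<tau>) *v u - u) = norm (u - ?E \<tau> *v u)" using En by metis
            then show ?thesis by (simp add: norm_minus_commute)
          qed
          also have "norm (?E \<tau> *v u - u) + norm (u - f t) \<le> e0 * B + e0"
            using tau(3) tau(4) fB[of "t + \<tau>"] e0 unfolding u_def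
            by (intro add_mono order_trans[OF spec[OF tau(3)]] mult_left_mono) auto
          also have "\<dots> = e0 * (B + 1)" by (simp add: algebra_simps)
          also have "\<dots> = \<epsilon>" using B0 unfolding e0_def by simp
          finally show ?thesis .
        qed
        then show "\<exists>\<tau>. a \<le> \<tau> \<and> \<tau> \<le> a + L \<and> (\<forall>t. norm (h (t + \<tau>) - h t) \<le> \<epsilon>)" using tau by blast
      qed
    qed
    then show ?thesis using mean_exists[OF hc hB] that unfolding avlim_def by blast
  qed
  obtain cN where cN: "avlim q cN"
  proof -
    have "\<forall>\<epsilon>>0. \<exists>L. \<forall>a. \<exists>\<tau>. a \<le> \<tau> \<and> \<tau> \<le> a + L \<and> (\<forall>t. norm (q (t + \<tau>) - q t) \<le> \<epsilon>)"
    proof (intro allI impI)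
      fix \<epsilon> :: real assume e: "\<epsilon> > 0"
      define e0 where "e0 = \<epsilon> / (2 * B + 1)"
      have e0: "e0 > 0" using e B0 by (simp add: e0_def)
      obtain L where L: "\<forall>a. \<exists>\<tau>. a \<le> \<tau> \<and> \<tau> \<le> a + L \<and> (\<forall>y. norm (?E \<tau> *v y - y) \<le> e0 * norm y) \<and>
         (\<forall>t. norm (f (t + \<tau>) - f t) \<le> e0)" using ap[OF e0] by blast
      show "\<exists>L. \<forall>a. \<exists>\<tau>. a \<le> \<tau> \<and> \<tau> \<le> a + L \<and> (\<forall>t. norm (q (t + \<tau>) - q t) \<le> \<epsilon>)"
      proof (rule exI[of _ L], intro allI)
        fix a
        obtain \<tau> where tau: "a \<le> \<tau>" "\<tau> \<le> a + L"
           "\<forall>t. norm (f (t + \<tau>) - f t) \<le> e0" using L by blast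
        have "norm (q (t + \<tau>) - q t) \<le> \<epsilon>" for t
        proof -
          let ?a = "norm (f (t + \<tau>))" and ?b = "norm (f t)"
          have "q (t + \<tau>) - q t = (?a - ?b) * (?a + ?b)"
            by (simp add: q_def power2_eq_square algebra_simps)
          then have "norm (q (t + \<tau>) - q t) = \<bar>?a - ?b\<bar> * \<bar>?a + ?b\<bar>" by (simp add: abs_mult)
          also have "\<bar>?a + ?b\<bar> = ?a + ?b" by simp
          finally have "norm (q (t + \<tau>) - q t) = \<bar>?a - ?b\<bar> * (?a + ?b)" .
          also have "\<dots> \<le> e0 * (2 * B)"
          proof (rule mult_mono)
            show "\<bar>?a - ?b\<bar> \<le> e0" using tau(3) norm_triangle_ineq3 order_trans by blast
            show "?a + ?b \<le> 2 * B" using fB[of t] fB[of "t + \<tau>"] by simp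
          qed (use e0 in auto)
          also have "\<dots> \<le> \<epsilon>" using B0 e by (simp add: e0_def field_simps)
          finally show ?thesis .
        qed
        then show "\<exists>\<tau>. a \<le> \<tau> \<and> \<tau> \<le> a + L \<and> (\<forall>t. norm (q (t + \<tau>) - q t) \<le> \<epsilon>)" using tau by blast
      qed
    qed
    then show ?thesis using mean_exists[OF qc qB] that unfolding avlim_def by blast
  qed
  \<comment> \<open>identification of the objects\<close>
  have avC: "avgC \<Omega> F x = cf"
  proof -
    have "(\<lambda>t. F (mexp \<Omega> t *v x) t) = f" by (simp add: f_def fun_eq_iff)
    then show ?thesis unfolding avgC_def using avlim_tavg[OF cf] by simp
  qed
  define w0 where "w0 = omega_hat_inv \<Omega> *v cf"
  define v where "v = \<Omega> *v w0"
  define u where "u t = ?E (-t) *v v" for t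
  have Pf: "Pfun \<Omega> F x = w0" by (simp add: Pfun_def avC w0_def)
  have cFe: "calF \<Omega> F x = h" by (simp add: fun_eq_iff calF_def h_def f_def)
  have cGe: "calG \<Omega> F x = (\<lambda>t. h t - u t)"
    by (simp add: fun_eq_iff calG_def h_def f_def u_def Pf v_def matrix_vector_mult_diff_distrib)
  have uc: "continuous_on UNIV u" unfolding u_def
    by (intro mv_cont continuous_on_compose2[OF Ec] continuous_intros) auto
  have u0: "avlim u 0"
  proof (rule avlim_bounded_integral)
    fix T :: real assume T: "T \<ge> 0"
    define \<phi> where "\<phi> s = - (?E (-s) *v w0)" for s
    have "(u has_integral (\<phi> T - \<phi> 0)) {0..T}"
    proof (rule fundamental_theorem_of_calculus[OF T])
      fix s :: real assume "s \<in> {0..T}"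
      have "(\<phi> has_vector_derivative - (- (?E (-s) *v (\<Omega> *v w0)))) (at s)"
        unfolding \<phi>_def by (intro has_vector_derivative_minus Ed)
      then show "(\<phi> has_vector_derivative u s) (at s within {0..T})"
        by (simp add: u_def v_def has_vector_derivative_at_within)
    qed
    then have "integral {0..T} u = w0 - ?E (-T) *v w0" by (simp add: integral_unique \<phi>_def E0)
    then have "norm (integral {0..T} u) \<le> norm w0 + norm (?E (-T) *v w0)" by (simp add: norm_triangle_ineq4)
    then show "norm (integral {0..T} u) \<le> 2 * norm w0" by (simp add: En)
  qed
  have Fb: "tavg (calF \<Omega> F x) = cF" unfolding cFe by (rule avlim_tavg[OF cF])
  have Gb: "tavg (calG \<Omega> F x) = cF"
    unfolding cGe using avlim_tavg[OF avlim_diff[OF hc uc cF u0]] by simp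
  have DFe: "DcalF \<Omega> F x = (\<lambda>t. h t - cF)" by (simp add: fun_eq_iff DcalF_def cFe avlim_tavg[OF cF])
  have DGe: "DcalG \<Omega> F x = (\<lambda>t. h t - u t - cF)" by (simp add: fun_eq_iff DcalG_def Gb[unfolded cGe] cGe)
  have D1: "(\<lambda>t. DcalF \<Omega> F x t - DcalG \<Omega> F x t) = u" by (simp add: fun_eq_iff DFe DGe)
  \<comment> \<open>algebraic facts\<close>
  have ker: "\<Omega> *v (cf - v) = 0"
  proof -
    have "\<Omega> *v v = (\<Omega> ** \<Omega> ** omega_hat_inv \<Omega>) *v cf"
      by (simp add: v_def w0_def matrix_vector_mul_assoc matrix_mul_assoc)
    also have "\<dots> = \<Omega> *v cf" by (simp add: omega_hat_inv_prop[OF skew])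
    finally show ?thesis by (simp add: matrix_vector_mult_diff_distrib)
  qed
  have vcv: "v \<bullet> cf = v \<bullet> v"
  proof -
    have "v \<bullet> (cf - v) = - (w0 \<bullet> (\<Omega> *v (cf - v)))" unfolding v_def by (rule skew_inner[OF skew])
    then have "v \<bullet> (cf - v) = 0" by (simp add: ker)
    then show ?thesis by (simp add: inner_diff_right)
  qed
  have uh: "u t \<bullet> h t = v \<bullet> f t" for t by (simp add: u_def h_def Ei)
  have uu: "u t \<bullet> u t = v \<bullet> v" for t by (simp add: u_def Ei)
  have hh: "h t \<bullet> h t = q t" for t by (simp add: h_def q_def Ei power2_norm_eq_inner)
  \<comment> \<open>first claim\<close>
  have fvc: "continuous_on UNIV (\<lambda>t. v \<bullet> f t)" by (intro continuous_intros fc)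
  have ucc: "continuous_on UNIV (\<lambda>t. u t \<bullet> cF)" by (intro continuous_intros uc)
  have a1: "avlim (\<lambda>t. v \<bullet> f t) (v \<bullet> cf)"
    by (rule avlim_linear[OF bounded_linear_inner_right fc cf])
  have a2: "avlim (\<lambda>t. u t \<bullet> cF) (0 \<bullet> cF)"
    by (rule avlim_linear[OF bounded_linear_inner_left uc u0])
  have a3: "avlim (\<lambda>t. (v \<bullet> f t - v \<bullet> v) - u t \<bullet> cF) ((v \<bullet> cf - v \<bullet> v) - 0 \<bullet> cF)"
    by (intro avlim_diff avlim_const a1 a2 fvc ucc continuous_intros)
  have e1: "(\<lambda>t. u t \<bullet> DcalG \<Omega> F x t) = (\<lambda>t. (v \<bullet> f t - v \<bullet> v) - u t \<bullet> cF)"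
    by (simp add: fun_eq_iff DGe inner_diff_right uh uu)
  have claim1: "tinner (\<lambda>t. DcalF \<Omega> F x t - DcalG \<Omega> F x t) (DcalG \<Omega> F x) = 0"
    unfolding tinner_def D1 e1 using avlim_tavg[OF a3] vcv by simp
  \<comment> \<open>second claim\<close>
  have hcc: "continuous_on UNIV (\<lambda>t. 2 * (h t \<bullet> cF))" by (intro continuous_intros hc)
  define AF where "AF = cN - 2 * (cF \<bullet> cF) + cF \<bullet> cF"
  have bF: "avlim (\<lambda>t. (q t - 2 * (h t \<bullet> cF)) + cF \<bullet> cF) AF"
    unfolding AF_def
    by (intro avlim_add avlim_diff avlim_const cN qc hcc continuous_intros
        avlim_linear[OF _ hc cF, of "\<lambda>z. 2 * (z \<bullet> cF)", simplified]
        bounded_linear_mult_right bounded_linear_inner_left bounded_linear_compose[of "\<lambda>r. 2 * r"])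
  have eF: "(\<lambda>t. DcalF \<Omega> F x t \<bullet> DcalF \<Omega> F x t) = (\<lambda>t. (q t - 2 * (h t \<bullet> cF)) + cF \<bullet> cF)"
    by (simp add: fun_eq_iff DFe inner_diff_left inner_diff_right hh inner_commute)
  have cF2: "continuous_on UNIV (\<lambda>t. (q t - 2 * (h t \<bullet> cF)) + cF \<bullet> cF)"
    by (intro continuous_intros qc hc)
  have wc: "continuous_on UNIV (\<lambda>t. 2 * (v \<bullet> f t - u t \<bullet> cF))" by (intro continuous_intros fc uc)
  have bG0: "avlim (\<lambda>t. 2 * (v \<bullet> f t - u t \<bullet> cF)) (2 * (v \<bullet> cf - 0 \<bullet> cF))"
    by (rule avlim_linear[OF bounded_linear_mult_right _ avlim_diff[OF fvc ucc a1 a2]])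
      (intro continuous_intros fc uc)
  define AG where "AG = (AF - 2 * (v \<bullet> cf - 0 \<bullet> cF)) + v \<bullet> v"
  have bG: "avlim (\<lambda>t. (((q t - 2 * (h t \<bullet> cF)) + cF \<bullet> cF) - 2 * (v \<bullet> f t - u t \<bullet> cF)) + v \<bullet> v) AG"
    unfolding AG_def by (intro avlim_add avlim_diff avlim_const bF bG0 cF2 wc continuous_intros)
  have eG: "(\<lambda>t. DcalG \<Omega> F x t \<bullet> DcalG \<Omega> F x t) =
      (\<lambda>t. (((q t - 2 * (h t \<bullet> cF)) + cF \<bullet> cF) - 2 * (v \<bullet> f t - u t \<bullet> cF)) + v \<bullet> v)"
  proof
    fix t
    have "DcalG \<Omega> F x t \<bullet> DcalG \<Omega> F x t = (h t - cF) \<bullet> (h t - cF) - 2 * (u t \<bullet> h t - u t \<bullet> cF) + u t \<bullet> u t"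
      by (simp add: DGe inner_diff_left inner_diff_right inner_commute algebra_simps)
    also have "(h t - cF) \<bullet> (h t - cF) = (q t - 2 * (h t \<bullet> cF)) + cF \<bullet> cF"
      by (simp add: inner_diff_left inner_diff_right hh inner_commute)
    finally show "DcalG \<Omega> F x t \<bullet> DcalG \<Omega> F x t =
      (((q t - 2 * (h t \<bullet> cF)) + cF \<bullet> cF) - 2 * (v \<bullet> f t - u t \<bullet> cF)) + v \<bullet> v"
      by (simp add: uh uu)
  qed
  have TF: "tinner (DcalF \<Omega> F x) (DcalF \<Omega> F x) = AF"
    unfolding tinner_def eF by (rule avlim_tavg[OF bF])
  have TG: "tinner (DcalG \<Omega> F x) (DcalG \<Omega> F x) = AG"
    unfolding tinner_def eG by (rule avlim_tavg[OF bG])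
  have TD: "tinner (\<lambda>t. DcalF \<Omega> F x t - DcalG \<Omega> F x t) (\<lambda>t. DcalF \<Omega> F x t - DcalG \<Omega> F x t) = v \<bullet> v"
    unfolding tinner_def D1 uu by (rule avlim_tavg[OF avlim_const])
  have AG0: "AG \<ge> 0"
  proof (rule avlim_ge0[OF _ _ bG])
    show "continuous_on UNIV (\<lambda>t. (((q t - 2 * (h t \<bullet> cF)) + cF \<bullet> cF) - 2 * (v \<bullet> f t - u t \<bullet> cF)) + v \<bullet> v)"
      by (intro continuous_intros qc hc fc uc)
    fix t show "0 \<le> (((q t - 2 * (h t \<bullet> cF)) + cF \<bullet> cF) - 2 * (v \<bullet> f t - u t \<bullet> cF)) + v \<bullet> v"
      using eG[THEN fun_cong, of t] inner_ge_zero[of "DcalG \<Omega> F x t"] by simp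
  qed
  have AFG: "AF = AG + v \<bullet> v" unfolding AG_def using vcv by simp
  have vv0: "v \<bullet> v \<ge> 0" by simp
  show ?thesis
  proof (intro conjI)
    show "tinner (\<lambda>t. DcalF \<Omega> F x t - DcalG \<Omega> F x t) (DcalG \<Omega> F x) = 0" by (rule claim1)
    show "(tnorm (DcalF \<Omega> F x))\<^sup>2 = (tnorm (DcalG \<Omega> F x))\<^sup>2 + (tnorm (\<lambda>t. DcalF \<Omega> F x t - DcalG \<Omega> F x t))\<^sup>2"
      unfolding tnorm_def TF TG TD using AG0 vv0 AFG by simp
    show "tnorm (DcalG \<Omega> F x) \<le> tnorm (DcalF \<Omega> F x)"
      unfolding tnorm_def TF TG using AFG vv0 by simp
  qed
qed

end
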